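(* Let $X_1,X_2,\ldots$ be i.i.d. with mean $0$ and variance $1$, and let $G_n\in\mathscr G_n$ with $|E(G_n)|\to\infty$ satisfy the $\Sigma$-co-degree condition for an infinite matrix $\Sigma=((\sigma_{st}))_{s,t\ge1}$. For $M$ with $b_M>0$ let $V_M:=\bm X_{\infty,M}^\top\Sigma\bm X_{\infty,M}$ and $Q_{1,M}\sim N(0,V_M)$. Then $V_M$ converges in $L^1$, as $M\to\infty$, to some random variable $V=:\bm X_\infty^\top\Sigma\bm X_\infty$, and consequently $Q_{1,M}\to Q_1$ in distribution as $M\to\infty$, where $Q_1\sim N(0,V)$ is a well-defined random variable with finite second moment.
   Context: $\mathscr G_n$: simple undirected graphs on $\{1,\ldots,n\}$ labeled so that degrees satisfy $d_1\ge\cdots\ge d_n$; $A(G_n)=((a_{u,v}))$ adjacency matrix, $E(G_n)$ edge set. $\Sigma$-co-degree condition: for each fixed $s,t\ge1$, $\lim_n\frac{1}{|E(G_n)|}\sum_{v=1}^na_{s,v}a_{v,t}=\sigma_{st}$. Truncation: $a_M=\mathbb E[X_1\mathbf 1\{|X_1|\le M\}]$, $b_M=\operatorname{Var}[X_1\mathbf 1\{|X_1|\le M\}]$, $X_{u,M}:=b_M^{-1/2}(X_u\mathbf 1\{|X_u|\le M\}-a_M)$, $\bm X_{\infty,M}=(X_{1,M},X_{2,M},\ldots)$. $\bm X_{\infty,M}^\top\Sigma\bm X_{\infty,M}$ denotes the $L^1$-limit as $K\to\infty$ of $\sum_{1\le s,t\le K}\sigma_{st}X_{s,M}X_{t,M}$.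 For a nonnegative random variable $A$, $N(0,A)$ is the law of $\sqrt A\,W$ with $W\sim N(0,1)$ independent of $A$. *)

theory Defs
  imports "HOL-Probability.Probability"
begin

definition simple_graph_on :: "nat \<Rightarrow> (nat \<Rightarrow> nat \<Rightarrow> bool) \<Rightarrow> bool" where
  "simple_graph_on n E \<longleftrightarrow>
     (\<forall>u v. E u v \<longrightarrow> u \<in> {1..n} \<and> v \<in> {1..n}) \<and>
     (\<forall>u v. E u v \<longleftrightarrow> E v u) \<and> (\<forall>u. \<not> E u u)"

definition gdeg :: "nat \<Rightarrow> (nat \<Rightarrow> nat \<Rightarrow> bool) \<Rightarrow> nat \<Rightarrow> nat" where
  "gdeg n E u = card {v \<in> {1..n}. E u v}"

definition in_script_G :: "nat \<Rightarrow> (nat \<Rightarrow> nat \<Rightarrow> bool) \<Rightarrow> bool" where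
  "in_script_G n E \<longleftrightarrow> simple_graph_on n E \<and>
     (\<forall>u v. 1 \<le> u \<longrightarrow> u \<le> v \<longrightarrow> v \<le> n \<longrightarrow> gdeg n E v \<le> gdeg n E u)"

definition num_edges :: "nat \<Rightarrow> (nat \<Rightarrow> nat \<Rightarrow> bool) \<Rightarrow> nat" where
  "num_edges n E = card {(u, v). u \<in> {1..n} \<and> v \<in> {1..n} \<and> u < v \<and> E u v}"

definition adj :: "(nat \<Rightarrow> nat \<Rightarrow> bool) \<Rightarrow> nat \<Rightarrow> nat \<Rightarrow> real" where
  "adj E u v = (if E u v then 1 else 0)"

definition codegree_condition ::
  "(nat \<Rightarrow> nat \<Rightarrow> nat \<Rightarrow> bool) \<Rightarrow> (nat \<Rightarrow> nat \<Rightarrow> real) \<Rightarrow> bool" where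
  "codegree_condition G \<sigma> \<longleftrightarrow>
     (\<forall>s t. 1 \<le> s \<longrightarrow> 1 \<le> t \<longrightarrow>
        (\<lambda>n. (\<Sum>v = 1..n. adj (G n) s v * adj (G n) v t) / real (num_edges n (G n)))
          \<longlonglongrightarrow> \<sigma> s t)"

definition trunc_mean :: "'a measure \<Rightarrow> (nat \<Rightarrow> 'a \<Rightarrow> real) \<Rightarrow> real \<Rightarrow> real" where
  "trunc_mean P X M = integral\<^sup>L P (\<lambda>x. X 1 x * indicator {y. \<bar>y\<bar> \<le> M} (X 1 x))"

definition trunc_var :: "'a measure \<Rightarrow> (nat \<Rightarrow> 'a \<Rightarrow> real) \<Rightarrow> real \<Rightarrow> real" where
  "trunc_var P X M = integral\<^sup>L P (\<lambda>x.
      (X 1 x * indicator {y. \<bar>y\<bar> \<le> M} (X 1 x) - trunc_mean P X M)\<^sup>2)"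

definition trunc_std :: "'a measure \<Rightarrow> (nat \<Rightarrow> 'a \<Rightarrow> real) \<Rightarrow> real \<Rightarrow> nat \<Rightarrow> 'a \<Rightarrow> real" where
  "trunc_std P X M u x =
     (X u x * indicator {y. \<bar>y\<bar> \<le> M} (X u x) - trunc_mean P X M) / sqrt (trunc_var P X M)"

definition L1_conv :: "'a measure \<Rightarrow> ('i \<Rightarrow> 'a \<Rightarrow> real) \<Rightarrow> ('a \<Rightarrow> real) \<Rightarrow> 'i filter \<Rightarrow> bool" where
  "L1_conv P f g F \<longleftrightarrow> integrable P g \<and> (\<forall>\<^sub>F i in F. integrable P (f i)) \<and>
     ((\<lambda>i. \<integral>x. \<bar>f i x - g x\<bar> \<partial>P) \<longlongrightarrow> 0) F"

definition quad_partial ::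
  "(nat \<Rightarrow> nat \<Rightarrow> real) \<Rightarrow> (nat \<Rightarrow> 'a \<Rightarrow> real) \<Rightarrow> nat \<Rightarrow> 'a \<Rightarrow> real" where
  "quad_partial \<sigma> Y K x = (\<Sum>s = 1..K. \<Sum>t = 1..K. \<sigma> s t * Y s x * Y t x)"

text \<open>N(0,A): law of sqrt(A) W with W standard normal independent of A.\<close>

definition normal_mix :: "'a measure \<Rightarrow> ('a \<Rightarrow> real) \<Rightarrow> real measure" where
  "normal_mix P A = distr (distr P borel A \<Otimes>\<^sub>M std_normal_distribution) borel
                         (\<lambda>(a, w). sqrt a * w)"

definition weak_conv_at_top :: "(real \<Rightarrow> real measure) \<Rightarrow> real measure \<Rightarrow> bool" where
  "weak_conv_at_top \<mu> \<nu> \<longleftrightarrow>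
     (\<forall>Ms :: nat \<Rightarrow> real. filterlim Ms at_top sequentially \<longrightarrow> weak_conv_m (\<lambda>k. \<mu> (Ms k)) \<nu>)"

end

theory Submission
  imports Defs
begin

lemma L1_complete:
  fixes f :: "nat \<Rightarrow> 'a \<Rightarrow> real"
  assumes int: "\<And>n. integrable M (f n)"
    and cau: "\<And>e. e > 0 \<Longrightarrow> \<exists>N. \<forall>m\<ge>N. \<forall>n\<ge>N. (\<integral>x. \<bar>f m x - f n x\<bar> \<partial>M) < e"
  shows "\<exists>g. g \<in> borel_measurable M \<and> integrable M g \<and> (\<lambda>n. \<integral>x. \<bar>f n x - g x\<bar> \<partial>M) \<longlonglongrightarrow> 0"
proof -
  have fm[measurable]: "\<And>n. f n \<in> borel_measurable M" using int by auto
  have absint: "\<And>a b. integrable M (\<lambda>x. \<bar>f a x - f b x\<bar>)"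
    by (intro integrable_abs Bochner_Integration.integrable_diff int)
  define N where "N k = (SOME N. \<forall>m\<ge>N. \<forall>n\<ge>N. (\<integral>x. \<bar>f m x - f n x\<bar> \<partial>M) < (1/2::real)^k)" for k
  have N: "(\<integral>x. \<bar>f m x - f n x\<bar> \<partial>M) < (1/2)^k" if "m \<ge> N k" "n \<ge> N k" for k m n
  proof -
    have "\<exists>N. \<forall>m\<ge>N. \<forall>n\<ge>N. (\<integral>x. \<bar>f m x - f n x\<bar> \<partial>M) < (1/2::real)^k"
      by (rule cau) simp
    from someI_ex[OF this] show ?thesis using that unfolding N_def by blast
  qed
  define r where "r k = k + (\<Sum>i\<le>k. N i)" for k
  have rN: "N k \<le> r m" if "k \<le> m" for k m
  proof -
    have "N k \<le> (\<Sum>i\<le>m. N i)" by (rule member_le_sum) (use that in auto)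
    then show ?thesis unfolding r_def by simp
  qed
  have rmono: "r k \<le> r m" if "k \<le> m" for k m
  proof -
    have "(\<Sum>i\<le>k. N i) \<le> (\<Sum>i\<le>m. N i)" by (rule sum_mono2) (use that in auto)
    then show ?thesis unfolding r_def using that by simp
  qed
  define D where "D k x = \<bar>f (r (Suc k)) x - f (r k) x\<bar>" for k x
  have Dm[measurable]: "\<And>k. D k \<in> borel_measurable M" unfolding D_def by measurable
  have Dint: "integrable M (D k)" for k unfolding D_def using int by auto
  have Dle: "(\<integral>x. D k x \<partial>M) < (1/2)^k" for k
    unfolding D_def by (rule N) (auto intro: rN)
  have "(\<integral>\<^sup>+x. (\<Sum>k. ennreal (D k x)) \<partial>M) = (\<Sum>k. \<integral>\<^sup>+x. ennreal (D k x) \<partial>M)"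
    by (rule nn_integral_suminf) measurable
  also have "\<dots> = (\<Sum>k. ennreal (\<integral>x. D k x \<partial>M))"
    by (intro suminf_cong nn_integral_eq_integral Dint) (auto simp: D_def)
  also have "\<dots> \<le> (\<Sum>k. ennreal ((1/2)^k))"
    by (intro suminf_le ennreal_leI less_imp_le[OF Dle]) auto
  also have "\<dots> = ennreal (\<Sum>k. (1/2)^k)"
    by (rule suminf_ennreal2) auto
  finally have fin: "(\<integral>\<^sup>+x. (\<Sum>k. ennreal (D k x)) \<partial>M) \<noteq> \<infinity>"
    by (auto simp: top_unique)
  have "AE x in M. (\<Sum>k. ennreal (D k x)) \<noteq> \<infinity>"
    by (rule nn_integral_PInf_AE[OF _ fin]) measurable
  then have AEconv: "AE x in M. convergent (\<lambda>n. f (r n) x)"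
  proof (rule AE_mp, intro AE_I2 impI)
    fix x assume "(\<Sum>k. ennreal (D k x)) \<noteq> \<infinity>"
    then have "summable (\<lambda>k. D k x)"
      by (intro summable_suminf_not_top) (auto simp: D_def)
    then have "summable (\<lambda>k. f (r (Suc k)) x - f (r k) x)"
      unfolding D_def by (rule summable_rabs_cancel)
    then have "(\<lambda>n. \<Sum>k<n. f (r (Suc k)) x - f (r k) x) \<longlonglongrightarrow> (\<Sum>k. f (r (Suc k)) x - f (r k) x)"
      by (rule summable_LIMSEQ)
    then have "(\<lambda>n. f (r 0) x + (\<Sum>k<n. f (r (Suc k)) x - f (r k) x)) \<longlonglongrightarrow> f (r 0) x + (\<Sum>k. f (r (Suc k)) x - f (r k) x)"
      by (intro tendsto_add tendsto_const)
    moreover have "f (r 0) x + (\<Sum>k<n. f (r (Suc k)) x - f (r k) x) = f (r n) x" for n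
      by (induction n) auto
    ultimately show "convergent (\<lambda>n. f (r n) x)" unfolding convergent_def by auto
  qed
  define g where "g x = lim (\<lambda>n. f (r n) x)" for x
  have gm[measurable]: "g \<in> borel_measurable M" unfolding g_def by measurable
  have AElim: "AE x in M. (\<lambda>n. f (r n) x) \<longlonglongrightarrow> g x"
    using AEconv by eventually_elim (simp add: g_def convergent_LIMSEQ_iff)
  have bnd: "(\<integral>\<^sup>+x. ennreal \<bar>f n x - g x\<bar> \<partial>M) \<le> ennreal ((1/2)^k)" if "n \<ge> N k" for n k
  proof -
    have "(\<integral>\<^sup>+x. ennreal \<bar>f n x - g x\<bar> \<partial>M) = (\<integral>\<^sup>+x. liminf (\<lambda>m. ennreal \<bar>f n x - f (r m) x\<bar>) \<partial>M)"
    proof (rule nn_integral_cong_AE)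
      show "AE x in M. ennreal \<bar>f n x - g x\<bar> = liminf (\<lambda>m. ennreal \<bar>f n x - f (r m) x\<bar>)"
        using AElim
      proof eventually_elim
        case (elim x)
        have "(\<lambda>m. ennreal \<bar>f n x - f (r m) x\<bar>) \<longlonglongrightarrow> ennreal \<bar>f n x - g x\<bar>"
          by (intro tendsto_ennrealI tendsto_rabs tendsto_diff tendsto_const elim)
        from lim_imp_Liminf[OF sequentially_bot this] show ?case by simp
      qed
    qed
    also have "\<dots> \<le> liminf (\<lambda>m. \<integral>\<^sup>+x. ennreal \<bar>f n x - f (r m) x\<bar> \<partial>M)"
      by (rule nn_integral_liminf) measurable
    also have "\<dots> \<le> ennreal ((1/2)^k)"
    proof (rule Liminf_le)
      show "\<forall>\<^sub>F m in sequentially. (\<integral>\<^sup>+x. ennreal \<bar>f n x - f (r m) x\<bar> \<partial>M) \<le> ennreal ((1/2)^k)"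
        unfolding eventually_sequentially
      proof (intro exI allI impI)
        fix m assume "k \<le> m"
        have "(\<integral>\<^sup>+x. ennreal \<bar>f n x - f (r m) x\<bar> \<partial>M) = ennreal (\<integral>x. \<bar>f n x - f (r m) x\<bar> \<partial>M)"
          by (intro nn_integral_eq_integral) (auto intro: absint)
        also have "\<dots> \<le> ennreal ((1/2)^k)"
          by (intro ennreal_leI less_imp_le[OF N] that rN \<open>k \<le> m\<close>)
        finally show "(\<integral>\<^sup>+x. ennreal \<bar>f n x - f (r m) x\<bar> \<partial>M) \<le> ennreal ((1/2)^k)" .
      qed
    qed simp
    finally show ?thesis .
  qed
  have intd: "integrable M (\<lambda>x. f n x - g x)" if "n \<ge> N k" for n k
  proof (rule integrableI_bounded)
    show "(\<integral>\<^sup>+x. ennreal (norm (f n x - g x)) \<partial>M) < \<infinity>"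
      using bnd[OF that] by (simp add: le_less_trans)
  qed measurable
  have gint: "integrable M g"
  proof -
    have "integrable M (\<lambda>x. f (N 0) x - (f (N 0) x - g x))"
      using Bochner_Integration.integrable_diff[OF int[of "N 0"] intd[where n="N 0" and k=0]] by simp
    then show ?thesis by simp
  qed
  have le: "(\<integral>x. \<bar>f n x - g x\<bar> \<partial>M) \<le> (1/2)^k" if "n \<ge> N k" for n k
  proof -
    have "ennreal (\<integral>x. \<bar>f n x - g x\<bar> \<partial>M) = (\<integral>\<^sup>+x. ennreal \<bar>f n x - g x\<bar> \<partial>M)"
      by (intro nn_integral_eq_integral[symmetric] integrable_abs Bochner_Integration.integrable_diff int gint) auto
    also have "\<dots> \<le> ennreal ((1/2)^k)" by (rule bnd[OF that])
    finally show ?thesis by (simp add: ennreal_le_iff)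
  qed
  have "(\<lambda>n. \<integral>x. \<bar>f n x - g x\<bar> \<partial>M) \<longlonglongrightarrow> 0"
  proof (rule LIMSEQ_I)
    fix e :: real assume "0 < e"
    obtain k where k: "(1/2::real)^k < e"
      using real_arch_pow_inv[OF \<open>0 < e\<close>, of "1/2"] by auto
    show "\<exists>no. \<forall>n\<ge>no. norm ((\<integral>x. \<bar>f n x - g x\<bar> \<partial>M) - 0) < e"
    proof (intro exI allI impI)
      fix n assume "N k \<le> n"
      have "0 \<le> (\<integral>x. \<bar>f n x - g x\<bar> \<partial>M)" by simp
      then show "norm ((\<integral>x. \<bar>f n x - g x\<bar> \<partial>M) - 0) < e"
        using le[OF \<open>N k \<le> n\<close>] k by simp
    qed
  qed
  with gm gint show ?thesis by blast
qed


lemma L1_nonneg: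
  fixes f :: "'i \<Rightarrow> 'a \<Rightarrow> real"
  assumes F: "F \<noteq> bot" and g: "integrable M g"
    and ev: "eventually (\<lambda>i. integrable M (f i) \<and> (AE x in M. f i x \<ge> 0)) F"
    and lim: "((\<lambda>i. \<integral>x. \<bar>f i x - g x\<bar> \<partial>M) \<longlongrightarrow> 0) F"
  shows "AE x in M. g x \<ge> 0"
proof -
  have ineg: "integrable M (\<lambda>x. max 0 (- g x))" using g by auto
  have "(\<integral>x. max 0 (- g x) \<partial>M) \<le> 0"
  proof (rule tendsto_le[OF F lim tendsto_const])
    show "\<forall>\<^sub>F i in F. (\<integral>x. max 0 (- g x) \<partial>M) \<le> (\<integral>x. \<bar>f i x - g x\<bar> \<partial>M)"
      using ev
    proof eventually_elim
      case (elim i)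
      then have fi: "integrable M (f i)" and ae: "AE x in M. f i x \<ge> 0" by auto
      show ?case
      proof (rule integral_mono_AE[OF ineg])
        show "integrable M (\<lambda>x. \<bar>f i x - g x\<bar>)" using fi g by auto
        show "AE x in M. max 0 (- g x) \<le> \<bar>f i x - g x\<bar>" using ae by eventually_elim auto
      qed
    qed
  qed
  moreover have "0 \<le> (\<integral>x. max 0 (- g x) \<partial>M)" by simp
  ultimately have "(\<integral>x. max 0 (- g x) \<partial>M) = 0" by simp
  then have "AE x in M. max 0 (- g x) = 0"
    using integral_nonneg_eq_0_iff_AE[OF ineg] by simp
  then show ?thesis by eventually_elim (simp add: max_def split: if_splits)
qed

lemma CS_integral:
  fixes f g :: "'a \<Rightarrow> real"
  assumes [measurable]: "f \<in> borel_measurable M" "g \<in> borel_measurable M"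
    and f2: "integrable M (\<lambda>x. (f x)\<^sup>2)" and g2: "integrable M (\<lambda>x. (g x)\<^sup>2)"
  shows "integrable M (\<lambda>x. f x * g x)"
    and "(\<integral>x. \<bar>f x * g x\<bar> \<partial>M) \<le> sqrt (\<integral>x. (f x)\<^sup>2 \<partial>M) * sqrt (\<integral>x. (g x)\<^sup>2 \<partial>M)"
proof -
  show fg: "integrable M (\<lambda>x. f x * g x)"
  proof (rule Bochner_Integration.integrable_bound)
    show "integrable M (\<lambda>x. (f x)\<^sup>2 + (g x)\<^sup>2)" using f2 g2 by auto
    show "AE x in M. norm (f x * g x) \<le> norm ((f x)\<^sup>2 + (g x)\<^sup>2)"
    proof (intro AE_I2)
      fix x
      have "2 * \<bar>f x\<bar> * \<bar>g x\<bar> \<le> (f x)\<^sup>2 + (g x)\<^sup>2"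
        using sum_squares_bound[of "\<bar>f x\<bar>" "\<bar>g x\<bar>"] by simp
      moreover have "0 \<le> \<bar>f x\<bar> * \<bar>g x\<bar>" by simp
      ultimately have "\<bar>f x\<bar> * \<bar>g x\<bar> \<le> (f x)\<^sup>2 + (g x)\<^sup>2" by linarith
      moreover have "\<bar>(f x)\<^sup>2 + (g x)\<^sup>2\<bar> = (f x)\<^sup>2 + (g x)\<^sup>2" by simp
      ultimately show "norm (f x * g x) \<le> norm ((f x)\<^sup>2 + (g x)\<^sup>2)"
        by (simp add: abs_mult)
    qed
  qed measurable
  define a where "a = (\<integral>x. \<bar>f x * g x\<bar> \<partial>M)"
  define b where "b = (\<integral>x. (f x)\<^sup>2 \<partial>M)"
  define c where "c = (\<integral>x. (g x)\<^sup>2 \<partial>M)"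
  have a0: "0 \<le> a" "0 \<le> b" "0 \<le> c" unfolding a_def b_def c_def by auto
  have "(\<integral>\<^sup>+x. ennreal \<bar>f x\<bar> * ennreal \<bar>g x\<bar> \<partial>M)\<^sup>2
     \<le> (\<integral>\<^sup>+x. (ennreal \<bar>f x\<bar>)^2 \<partial>M) * (\<integral>\<^sup>+x. (ennreal \<bar>g x\<bar>)^2 \<partial>M)"
    by (rule Cauchy_Schwarz_nn_integral) measurable
  moreover have "(\<integral>\<^sup>+x. ennreal \<bar>f x\<bar> * ennreal \<bar>g x\<bar> \<partial>M) = ennreal a"
  proof -
    have "(\<integral>\<^sup>+x. ennreal \<bar>f x\<bar> * ennreal \<bar>g x\<bar> \<partial>M) = (\<integral>\<^sup>+x. ennreal \<bar>f x * g x\<bar> \<partial>M)"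
      by (intro nn_integral_cong) (simp add: abs_mult ennreal_mult)
    also have "\<dots> = ennreal a" unfolding a_def
      by (intro nn_integral_eq_integral integrable_abs fg) auto
    finally show ?thesis .
  qed
  moreover have "(\<integral>\<^sup>+x. (ennreal \<bar>f x\<bar>)^2 \<partial>M) = ennreal b"
  proof -
    have "(\<integral>\<^sup>+x. (ennreal \<bar>f x\<bar>)^2 \<partial>M) = (\<integral>\<^sup>+x. ennreal ((f x)\<^sup>2) \<partial>M)"
      by (intro nn_integral_cong) (simp add: ennreal_power)
    also have "\<dots> = ennreal b" unfolding b_def
      by (intro nn_integral_eq_integral f2) auto
    finally show ?thesis .
  qed
  moreover have "(\<integral>\<^sup>+x. (ennreal \<bar>g x\<bar>)^2 \<partial>M) = ennreal c"
  proof -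
    have "(\<integral>\<^sup>+x. (ennreal \<bar>g x\<bar>)^2 \<partial>M) = (\<integral>\<^sup>+x. ennreal ((g x)\<^sup>2) \<partial>M)"
      by (intro nn_integral_cong) (simp add: ennreal_power)
    also have "\<dots> = ennreal c" unfolding c_def
      by (intro nn_integral_eq_integral g2) auto
    finally show ?thesis .
  qed
  ultimately have "ennreal (a\<^sup>2) \<le> ennreal (b * c)"
    using a0 by (simp add: ennreal_power ennreal_mult)
  then have "a\<^sup>2 \<le> b * c" using a0 by (simp add: ennreal_le_iff)
  then have "a \<le> sqrt (b * c)" using a0 by (simp add: real_le_rsqrt)
  then show "(\<integral>x. \<bar>f x * g x\<bar> \<partial>M) \<le> sqrt (\<integral>x. (f x)\<^sup>2 \<partial>M) * sqrt (\<integral>x. (g x)\<^sup>2 \<partial>M)"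
    unfolding a_def b_def c_def by (simp add: real_sqrt_mult)
qed

lemma (in prob_space) jensen_sq:
  fixes f :: "'a \<Rightarrow> real"
  assumes [measurable]: "f \<in> borel_measurable M" and f2: "integrable M (\<lambda>x. (f x)\<^sup>2)"
  shows "(\<integral>x. \<bar>f x\<bar> \<partial>M) \<le> sqrt (\<integral>x. (f x)\<^sup>2 \<partial>M)"
  using CS_integral(2)[OF assms(1) _ f2, of "\<lambda>_. 1"] by (simp add: prob_space)

definition bnd :: "'a measure \<Rightarrow> ('a \<Rightarrow> real) \<Rightarrow> bool" where
  "bnd M f \<longleftrightarrow> f \<in> borel_measurable M \<and> (\<exists>B. \<forall>x\<in>space M. \<bar>f x\<bar> \<le> B)"

lemma bnd_meas: "bnd M f \<Longrightarrow> f \<in> borel_measurable M" by (simp add: bnd_def)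

lemma bnd_integrable: "finite_measure M \<Longrightarrow> bnd M f \<Longrightarrow> integrable M f"
  unfolding bnd_def by (auto intro!: finite_measure.integrable_const_bound AE_I2)

lemma bnd_const: "bnd M (\<lambda>x. c)" by (auto simp: bnd_def)

lemma bnd_add: "bnd M f \<Longrightarrow> bnd M g \<Longrightarrow> bnd M (\<lambda>x. f x + g x)"
  unfolding bnd_def by (auto intro!: exI[of _ "_ + _"] abs_triangle_ineq[THEN order_trans] add_mono)

lemma bnd_diff: "bnd M f \<Longrightarrow> bnd M g \<Longrightarrow> bnd M (\<lambda>x. f x - g x)"
  unfolding bnd_def by (auto intro!: exI[of _ "_ + _"] abs_triangle_ineq4[THEN order_trans] add_mono)

lemma bnd_mult: "bnd M f \<Longrightarrow> bnd M g \<Longrightarrow> bnd M (\<lambda>x. f x * g x)"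
proof -
  assume "bnd M f" "bnd M g"
  then obtain A B where A: "\<forall>x\<in>space M. \<bar>f x\<bar> \<le> A" and B: "\<forall>x\<in>space M. \<bar>g x\<bar> \<le> B"
    and m: "f \<in> borel_measurable M" "g \<in> borel_measurable M" unfolding bnd_def by auto
  have "\<forall>x\<in>space M. \<bar>f x * g x\<bar> \<le> A * B"
  proof
    fix x assume x: "x \<in> space M"
    have "\<bar>f x * g x\<bar> = \<bar>f x\<bar> * \<bar>g x\<bar>" by (simp add: abs_mult)
    also have "\<dots> \<le> A * B" using A B x by (intro mult_mono) auto
    finally show "\<bar>f x * g x\<bar> \<le> A * B" .
  qed
  then show ?thesis using m unfolding bnd_def by auto
qed

lemma bnd_sum: "finite I \<Longrightarrow> (\<And>i. i \<in> I \<Longrightarrow> bnd M (f i)) \<Longrightarrow> bnd M (\<lambda>x. \<Sum>i\<in>I. f i x)"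
  by (induction I rule: finite_induct) (auto intro: bnd_add bnd_const)

lemma bnd_abs: "bnd M f \<Longrightarrow> bnd M (\<lambda>x. \<bar>f x\<bar>)"
  unfolding bnd_def by auto

lemma bnd_comp: "bnd borel \<phi> \<Longrightarrow> Y \<in> borel_measurable M \<Longrightarrow> bnd M (\<lambda>x. \<phi> (Y x))"
  unfolding bnd_def by (auto simp: measurable_compose)


locale iid = prob_space P for P :: "'a measure" +
  fixes X :: "nat \<Rightarrow> 'a \<Rightarrow> real"
  assumes Xm[measurable]: "\<And>i. X i \<in> borel_measurable P"
    and indep: "indep_vars (\<lambda>_. borel) X {1..}"
    and ident: "\<And>i. 1 \<le> i \<Longrightarrow> distr P borel (X i) = distr P borel (X 1)"
begin

lemma ident_int:
  fixes \<phi> :: "real \<Rightarrow> real"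
  assumes "1 \<le> i" and [measurable]: "\<phi> \<in> borel_measurable borel"
  shows "(\<integral>x. \<phi> (X i x) \<partial>P) = (\<integral>x. \<phi> (X 1 x) \<partial>P)"
proof -
  have "(\<integral>x. \<phi> (X i x) \<partial>P) = integral\<^sup>L (distr P borel (X i)) \<phi>"
    by (rule Bochner_Integration.integral_distr[symmetric]) auto
  also have "\<dots> = integral\<^sup>L (distr P borel (X 1)) \<phi>" using ident[OF assms(1)] by simp
  also have "\<dots> = (\<integral>x. \<phi> (X 1 x) \<partial>P)" by (rule Bochner_Integration.integral_distr) auto
  finally show ?thesis .
qed

lemma bndX: "bnd borel \<phi> \<Longrightarrow> bnd P (\<lambda>x. \<phi> (X i x))"
  by (rule bnd_comp) auto

lemma bndX_int: "bnd borel \<phi> \<Longrightarrow> integrable P (\<lambda>x. \<phi> (X i x))"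
  by (intro bnd_integrable bndX) (auto simp: finite_measure_axioms)

lemma bnd_if1: "bnd M f \<Longrightarrow> bnd M (\<lambda>x. if b then f x else 1)"
  by (cases b) (auto simp: bnd_const)

lemma prod4:
  assumes g: "bnd borel g1" "bnd borel g2" "bnd borel g3" "bnd borel g4"
    and i: "1 \<le> i1" "1 \<le> i2" "1 \<le> i3" "1 \<le> i4"
  defines "\<psi> \<equiv> \<lambda>i y. (if i = i1 then g1 y else 1) * (if i = i2 then g2 y else 1) *
                       (if i = i3 then g3 y else 1) * (if i = i4 then g4 y else 1)"
  shows "(\<integral>x. g1 (X i1 x) * g2 (X i2 x) * g3 (X i3 x) * g4 (X i4 x) \<partial>P)
       = (\<Prod>i\<in>{i1,i2,i3,i4}. \<integral>x. \<psi> i (X i x) \<partial>P)"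
proof -
  let ?I = "{i1,i2,i3,i4}"
  have bpsi: "bnd borel (\<psi> i)" for i
    unfolding \<psi>_def by (intro bnd_mult bnd_if1 g)
  have "indep_vars (\<lambda>_. borel) (\<lambda>i x. \<psi> i (X i x)) ?I"
    by (rule indep_vars_compose2[OF indep_vars_subset[OF indep]]) (use i bpsi in \<open>auto simp: bnd_def\<close>)
  then have eq: "(\<integral>x. (\<Prod>i\<in>?I. \<psi> i (X i x)) \<partial>P) = (\<Prod>i\<in>?I. \<integral>x. \<psi> i (X i x) \<partial>P)"
    by (intro indep_vars_lebesgue_integral) (auto intro: bndX_int bpsi)
  have "(\<Prod>i\<in>?I. \<psi> i (X i x)) = g1 (X i1 x) * g2 (X i2 x) * g3 (X i3 x) * g4 (X i4 x)" for x
    unfolding \<psi>_def prod.distrib by (simp add: prod.delta)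
  with eq show ?thesis by simp
qed

lemma prod4_zero:
  assumes g: "bnd borel g1" "bnd borel g2" "bnd borel g3" "bnd borel g4"
    and i: "1 \<le> i1" "1 \<le> i2" "1 \<le> i3" "1 \<le> i4"
    and u: "i1 \<noteq> i2" "i1 \<noteq> i3" "i1 \<noteq> i4"
    and z: "(\<integral>x. g1 (X 1 x) \<partial>P) = 0"
  shows "(\<integral>x. g1 (X i1 x) * g2 (X i2 x) * g3 (X i3 x) * g4 (X i4 x) \<partial>P) = 0"
proof -
  have "(\<integral>x. g1 (X i1 x) \<partial>P) = 0"
    using ident_int[OF i(1), of g1] g(1) z by (simp add: bnd_def)
  then show ?thesis
    unfolding prod4[OF g i] using u by (intro prod_zero) (auto intro!: bexI[of _ i1])
qed

lemma prod4_pair: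
  assumes g: "bnd borel g" "bnd borel h" and i: "1 \<le> s" "1 \<le> t" "s \<noteq> t"
  shows "(\<integral>x. g (X s x) * h (X t x) * g (X s x) * h (X t x) \<partial>P)
       = (\<integral>x. (g (X 1 x))\<^sup>2 \<partial>P) * (\<integral>x. (h (X 1 x))\<^sup>2 \<partial>P)"
proof -
  have m: "g \<in> borel_measurable borel" "h \<in> borel_measurable borel" using g by (auto simp: bnd_def)
  have "(\<integral>x. g (X s x) * h (X t x) * g (X s x) * h (X t x) \<partial>P)
     = (\<integral>x. (g (X s x))\<^sup>2 \<partial>P) * (\<integral>x. (h (X t x))\<^sup>2 \<partial>P)"
  proof -
    have "{s,t,s,t} = {s,t}" by auto
    then show ?thesis
      unfolding prod4[OF g g i(1,2,1,2)] using i by (simp add: power2_eq_square)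
  qed
  also have "\<dots> = (\<integral>x. (g (X 1 x))\<^sup>2 \<partial>P) * (\<integral>x. (h (X 1 x))\<^sup>2 \<partial>P)"
    using ident_int[OF i(1), of "\<lambda>y. (g y)\<^sup>2"] ident_int[OF i(2), of "\<lambda>y. (h y)\<^sup>2"] m by simp
  finally show ?thesis .
qed

end


context iid begin

lemma off_sq:
  fixes c :: "nat \<Rightarrow> nat \<Rightarrow> real"
  assumes R: "finite R" "\<And>p. p \<in> R \<Longrightarrow> 1 \<le> fst p \<and> 1 \<le> snd p \<and> fst p \<noteq> snd p \<and> (snd p, fst p) \<notin> R"
    and g: "bnd borel g" "bnd borel h"
    and z: "(\<integral>x. g (X 1 x) \<partial>P) = 0" "(\<integral>x. h (X 1 x) \<partial>P) = 0"
  shows "(\<integral>x. (\<Sum>p\<in>R. c (fst p) (snd p) * g (X (fst p) x) * h (X (snd p) x))\<^sup>2 \<partial>P)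
       = (\<Sum>p\<in>R. (c (fst p) (snd p))\<^sup>2) * (\<integral>x. (g (X 1 x))\<^sup>2 \<partial>P) * (\<integral>x. (h (X 1 x))\<^sup>2 \<partial>P)"
proof -
  define F where "F p x = c (fst p) (snd p) * g (X (fst p) x) * h (X (snd p) x)" for p x
  define Eg where "Eg = (\<integral>x. (g (X 1 x))\<^sup>2 \<partial>P)"
  define Eh where "Eh = (\<integral>x. (h (X 1 x))\<^sup>2 \<partial>P)"
  have bF: "bnd P (F p)" for p
    unfolding F_def by (intro bnd_mult bnd_const bndX g)
  have bFF: "integrable P (\<lambda>x. F p x * F q x)" for p q
    by (intro bnd_integrable bnd_mult bF) (auto simp: finite_measure_axioms)
  have sq: "(\<Sum>p\<in>R. F p x)\<^sup>2 = (\<Sum>p\<in>R. \<Sum>q\<in>R. F p x * F q x)" for x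
    by (simp add: power2_eq_square sum_product)
  have key: "(\<integral>x. F p x * F q x \<partial>P) = (if q = p then (c (fst p) (snd p))\<^sup>2 * Eg * Eh else 0)"
    if p: "p \<in> R" and q: "q \<in> R" for p q
  proof -
    obtain s t where pst: "p = (s, t)" by (cases p)
    obtain s' t' where qst: "q = (s', t')" by (cases q)
    have ps: "1 \<le> s" "1 \<le> t" "s \<noteq> t" "(t, s) \<notin> R" using R(2)[OF p] pst by auto
    have qs: "1 \<le> s'" "1 \<le> t'" "s' \<noteq> t'" "(t', s') \<notin> R" using R(2)[OF q] qst by auto
    have FF: "F p x * F q x = (c s t * c s' t') * (g (X s x) * h (X t x) * g (X s' x) * h (X t' x))" for x
      unfolding F_def pst qst by (simp add: ac_simps)
    show ?thesis
    proof (cases "q = p")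
      case True
      then have "(\<integral>x. F p x * F q x \<partial>P) = (c s t * c s t) * (\<integral>x. g (X s x) * h (X t x) * g (X s x) * h (X t x) \<partial>P)"
        unfolding FF using pst qst by simp
      also have "\<dots> = (c s t)\<^sup>2 * Eg * Eh"
        unfolding prod4_pair[OF g ps(1-3)] Eg_def Eh_def by (simp add: power2_eq_square)
      finally show ?thesis using True pst by simp
    next
      case False
      have "(\<integral>x. g (X s x) * h (X t x) * g (X s' x) * h (X t' x) \<partial>P) = 0"
      proof (cases "s \<noteq> s' \<and> s \<noteq> t'")
        case True
        then show ?thesis by (intro prod4_zero g ps qs z) (use ps in auto)
      next
        case False2: False
        have tu: "t \<noteq> s'" "t \<noteq> t'"
          using False2 False pst qst ps qs p q by auto
        have "(\<integral>x. g (X s x) * h (X t x) * g (X s' x) * h (X t' x) \<partial>P)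
            = (\<integral>x. h (X t x) * g (X s x) * g (X s' x) * h (X t' x) \<partial>P)"
          by (simp add: ac_simps)
        also have "\<dots> = 0" by (intro prod4_zero g ps qs z tu) (use ps in auto)
        finally show ?thesis .
      qed
      then show ?thesis unfolding FF using False by simp
    qed
  qed
  have "(\<integral>x. (\<Sum>p\<in>R. F p x)\<^sup>2 \<partial>P) = (\<Sum>p\<in>R. \<Sum>q\<in>R. \<integral>x. F p x * F q x \<partial>P)"
    unfolding sq by (simp add: bFF Bochner_Integration.integral_sum integrable_sum)
  also have "\<dots> = (\<Sum>p\<in>R. \<Sum>q\<in>R. if q = p then (c (fst p) (snd p))\<^sup>2 * Eg * Eh else 0)"
    by (intro sum.cong refl key) auto
  also have "\<dots> = (\<Sum>p\<in>R. (c (fst p) (snd p))\<^sup>2 * Eg * Eh)"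
    using R(1) by (simp add: sum.delta)
  also have "\<dots> = (\<Sum>p\<in>R. (c (fst p) (snd p))\<^sup>2) * Eg * Eh"
    by (simp add: sum_distrib_right)
  finally show ?thesis unfolding F_def Eg_def Eh_def .
qed

lemma off_bound:
  fixes c :: "nat \<Rightarrow> nat \<Rightarrow> real"
  assumes R: "finite R" "\<And>p. p \<in> R \<Longrightarrow> 1 \<le> fst p \<and> 1 \<le> snd p \<and> fst p \<noteq> snd p \<and> (snd p, fst p) \<notin> R"
    and RA: "R \<subseteq> A" "finite A"
    and g: "bnd borel g" "bnd borel h"
    and z: "(\<integral>x. g (X 1 x) \<partial>P) = 0" "(\<integral>x. h (X 1 x) \<partial>P) = 0"
  shows "(\<integral>x. \<bar>\<Sum>p\<in>R. c (fst p) (snd p) * g (X (fst p) x) * h (X (snd p) x)\<bar> \<partial>P)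
       \<le> sqrt (\<Sum>p\<in>A. (c (fst p) (snd p))\<^sup>2) * sqrt (\<integral>x. (g (X 1 x))\<^sup>2 \<partial>P) * sqrt (\<integral>x. (h (X 1 x))\<^sup>2 \<partial>P)"
proof -
  define S where "S x = (\<Sum>p\<in>R. c (fst p) (snd p) * g (X (fst p) x) * h (X (snd p) x))" for x
  have bS: "bnd P S" unfolding S_def
    by (intro bnd_sum R bnd_mult bnd_const bndX g)
  have "integrable P (\<lambda>x. S x * S x)"
    by (intro bnd_integrable bnd_mult[OF bS bS]) (auto simp: finite_measure_axioms)
  then have "(\<integral>x. \<bar>S x\<bar> \<partial>P) \<le> sqrt (\<integral>x. (S x)\<^sup>2 \<partial>P)"
    by (intro jensen_sq bnd_meas[OF bS]) (auto simp: power2_eq_square)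
  also have "(\<integral>x. (S x)\<^sup>2 \<partial>P) = (\<Sum>p\<in>R. (c (fst p) (snd p))\<^sup>2) * (\<integral>x. (g (X 1 x))\<^sup>2 \<partial>P) * (\<integral>x. (h (X 1 x))\<^sup>2 \<partial>P)"
    unfolding S_def by (rule off_sq[OF R g z])
  also have "sqrt \<dots> \<le> sqrt ((\<Sum>p\<in>A. (c (fst p) (snd p))\<^sup>2) * (\<integral>x. (g (X 1 x))\<^sup>2 \<partial>P) * (\<integral>x. (h (X 1 x))\<^sup>2 \<partial>P))"
  proof (intro real_sqrt_le_mono mult_right_mono)
    show "(\<Sum>p\<in>R. (c (fst p) (snd p))\<^sup>2) \<le> (\<Sum>p\<in>A. (c (fst p) (snd p))\<^sup>2)"
      by (rule sum_mono2[OF RA(2) RA(1)]) auto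
  qed auto
  also have "\<dots> = sqrt (\<Sum>p\<in>A. (c (fst p) (snd p))\<^sup>2) * sqrt (\<integral>x. (g (X 1 x))\<^sup>2 \<partial>P) * sqrt (\<integral>x. (h (X 1 x))\<^sup>2 \<partial>P)"
    by (simp add: real_sqrt_mult)
  finally show ?thesis unfolding S_def .
qed

lemma diag_bound:
  fixes c :: "nat \<Rightarrow> nat \<Rightarrow> real"
  assumes R: "finite R" "\<And>p. p \<in> R \<Longrightarrow> 1 \<le> fst p \<and> fst p = snd p"
    and g: "bnd borel g" "bnd borel h"
  shows "(\<integral>x. \<bar>\<Sum>p\<in>R. c (fst p) (snd p) * g (X (fst p) x) * h (X (snd p) x)\<bar> \<partial>P)
       \<le> (\<Sum>p\<in>R. \<bar>c (fst p) (snd p)\<bar>) * (\<integral>x. \<bar>g (X 1 x) * h (X 1 x)\<bar> \<partial>P)"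
proof -
  have bF: "bnd P (\<lambda>x. c (fst p) (snd p) * g (X (fst p) x) * h (X (snd p) x))" for p
    by (intro bnd_mult bnd_const bndX g)
  have ib: "integrable P (\<lambda>x. \<bar>c (fst p) (snd p) * g (X (fst p) x) * h (X (snd p) x)\<bar>)" for p
    by (intro bnd_integrable bnd_abs bF) (auto simp: finite_measure_axioms)
  have gm[measurable]: "g \<in> borel_measurable borel" "h \<in> borel_measurable borel" using g by (auto simp: bnd_def)
  have gm2: "(\<lambda>y. \<bar>g y * h y\<bar>) \<in> borel_measurable borel" by measurable
  have "(\<integral>x. \<bar>\<Sum>p\<in>R. c (fst p) (snd p) * g (X (fst p) x) * h (X (snd p) x)\<bar> \<partial>P)
      \<le> (\<integral>x. (\<Sum>p\<in>R. \<bar>c (fst p) (snd p) * g (X (fst p) x) * h (X (snd p) x)\<bar>) \<partial>P)"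
    by (intro integral_mono integrable_sum ib sum_abs bnd_integrable bnd_abs bnd_sum R bF)
       (auto simp: finite_measure_axioms)
  also have "\<dots> = (\<Sum>p\<in>R. \<integral>x. \<bar>c (fst p) (snd p) * g (X (fst p) x) * h (X (snd p) x)\<bar> \<partial>P)"
    by (intro Bochner_Integration.integral_sum ib)
  also have "\<dots> = (\<Sum>p\<in>R. \<bar>c (fst p) (snd p)\<bar> * (\<integral>x. \<bar>g (X 1 x) * h (X 1 x)\<bar> \<partial>P))"
  proof (intro sum.cong refl)
    fix p assume p: "p \<in> R"
    have "(\<integral>x. \<bar>c (fst p) (snd p) * g (X (fst p) x) * h (X (snd p) x)\<bar> \<partial>P)
        = \<bar>c (fst p) (snd p)\<bar> * (\<integral>x. \<bar>g (X (fst p) x) * h (X (fst p) x)\<bar> \<partial>P)"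
      using R(2)[OF p] by (simp add: abs_mult ac_simps)
    also have "(\<integral>x. \<bar>g (X (fst p) x) * h (X (fst p) x)\<bar> \<partial>P) = (\<integral>x. \<bar>g (X 1 x) * h (X 1 x)\<bar> \<partial>P)"
      using R(2)[OF p] by (intro ident_int[of _ "\<lambda>y. \<bar>g y * h y\<bar>"]) (auto simp: gm2)
    finally show "(\<integral>x. \<bar>c (fst p) (snd p) * g (X (fst p) x) * h (X (snd p) x)\<bar> \<partial>P)
        = \<bar>c (fst p) (snd p)\<bar> * (\<integral>x. \<bar>g (X 1 x) * h (X 1 x)\<bar> \<partial>P)" .
  qed
  also have "\<dots> = (\<Sum>p\<in>R. \<bar>c (fst p) (snd p)\<bar>) * (\<integral>x. \<bar>g (X 1 x) * h (X 1 x)\<bar> \<partial>P)"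
    by (simp add: sum_distrib_right)
  finally show ?thesis .
qed

lemma gen_bound:
  fixes c :: "nat \<Rightarrow> nat \<Rightarrow> real"
  assumes A: "finite A" "\<And>p. p \<in> A \<Longrightarrow> 1 \<le> fst p \<and> 1 \<le> snd p"
    and g: "bnd borel g" "bnd borel h"
    and z: "(\<integral>x. g (X 1 x) \<partial>P) = 0" "(\<integral>x. h (X 1 x) \<partial>P) = 0"
  shows "(\<integral>x. \<bar>\<Sum>p\<in>A. c (fst p) (snd p) * g (X (fst p) x) * h (X (snd p) x)\<bar> \<partial>P)
       \<le> (\<Sum>p\<in>{p\<in>A. fst p = snd p}. \<bar>c (fst p) (snd p)\<bar>) * (\<integral>x. \<bar>g (X 1 x) * h (X 1 x)\<bar> \<partial>P)
         + 2 * (sqrt (\<Sum>p\<in>A. (c (fst p) (snd p))\<^sup>2) * sqrt (\<integral>x. (g (X 1 x))\<^sup>2 \<partial>P) * sqrt (\<integral>x. (h (X 1 x))\<^sup>2 \<partial>P))"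
proof -
  define F where "F p x = c (fst p) (snd p) * g (X (fst p) x) * h (X (snd p) x)" for p x
  define A0 where "A0 = {p\<in>A. fst p = snd p}"
  define A1 where "A1 = {p\<in>A. fst p < snd p}"
  define A2 where "A2 = {p\<in>A. snd p < fst p}"
  have fin: "finite A0" "finite A1" "finite A2" using A(1) unfolding A0_def A1_def A2_def by auto
  have Aeq: "A = A0 \<union> (A1 \<union> A2)" unfolding A0_def A1_def A2_def by auto
  have split: "(\<Sum>p\<in>A. F p x) = (\<Sum>p\<in>A0. F p x) + ((\<Sum>p\<in>A1. F p x) + (\<Sum>p\<in>A2. F p x))" for x
    unfolding Aeq using fin
    by (subst sum.union_disjoint, simp, simp, force simp: A0_def A1_def A2_def,
        subst sum.union_disjoint, auto simp: A0_def A1_def A2_def)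
  have bF: "bnd P (\<lambda>x. \<Sum>p\<in>B. F p x)" if "finite B" for B
    unfolding F_def by (intro bnd_sum that bnd_mult bnd_const bndX g)
  have iF: "integrable P (\<lambda>x. \<bar>\<Sum>p\<in>B. F p x\<bar>)" if "finite B" for B
    by (intro bnd_integrable bnd_abs bF that) (auto simp: finite_measure_axioms)
  have "(\<integral>x. \<bar>\<Sum>p\<in>A. F p x\<bar> \<partial>P)
      \<le> (\<integral>x. \<bar>\<Sum>p\<in>A0. F p x\<bar> + (\<bar>\<Sum>p\<in>A1. F p x\<bar> + \<bar>\<Sum>p\<in>A2. F p x\<bar>) \<partial>P)"
    unfolding split
    using iF[OF A(1)] unfolding split
    by (intro integral_mono Bochner_Integration.integrable_add iF fin)
       (auto intro: abs_triangle_ineq[THEN order_trans] add_left_mono)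
  also have "\<dots> = (\<integral>x. \<bar>\<Sum>p\<in>A0. F p x\<bar> \<partial>P) + ((\<integral>x. \<bar>\<Sum>p\<in>A1. F p x\<bar> \<partial>P) + (\<integral>x. \<bar>\<Sum>p\<in>A2. F p x\<bar> \<partial>P))"
    by (simp add: iF fin)
  also have "\<dots> \<le> (\<Sum>p\<in>A0. \<bar>c (fst p) (snd p)\<bar>) * (\<integral>x. \<bar>g (X 1 x) * h (X 1 x)\<bar> \<partial>P)
      + (sqrt (\<Sum>p\<in>A. (c (fst p) (snd p))\<^sup>2) * sqrt (\<integral>x. (g (X 1 x))\<^sup>2 \<partial>P) * sqrt (\<integral>x. (h (X 1 x))\<^sup>2 \<partial>P)
       + sqrt (\<Sum>p\<in>A. (c (fst p) (snd p))\<^sup>2) * sqrt (\<integral>x. (g (X 1 x))\<^sup>2 \<partial>P) * sqrt (\<integral>x. (h (X 1 x))\<^sup>2 \<partial>P))"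
    unfolding F_def
  proof (intro add_mono diag_bound off_bound fin g z A(1))
    show "\<And>p. p \<in> A0 \<Longrightarrow> 1 \<le> fst p \<and> fst p = snd p" using A(2) unfolding A0_def by auto
    show "\<And>p. p \<in> A1 \<Longrightarrow> 1 \<le> fst p \<and> 1 \<le> snd p \<and> fst p \<noteq> snd p \<and> (snd p, fst p) \<notin> A1"
      using A(2) unfolding A1_def by auto
    show "\<And>p. p \<in> A2 \<Longrightarrow> 1 \<le> fst p \<and> 1 \<le> snd p \<and> fst p \<noteq> snd p \<and> (snd p, fst p) \<notin> A2"
      using A(2) unfolding A2_def by auto
    show "A1 \<subseteq> A" "A2 \<subseteq> A" unfolding A1_def A2_def by auto
  qed
  finally show ?thesis unfolding F_def A0_def by (simp add: ac_simps)
qed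

end


definition good_sigma :: "(nat \<Rightarrow> nat \<Rightarrow> real) \<Rightarrow> bool" where
  "good_sigma \<sigma> \<longleftrightarrow> (\<forall>s t. 1 \<le> s \<longrightarrow> 1 \<le> t \<longrightarrow> \<sigma> s t = \<sigma> t s \<and> 0 \<le> \<sigma> s t \<and> \<sigma> s t \<le> \<sigma> s s)
     \<and> (\<forall>K. (\<Sum>s=1..K. \<sigma> s s) \<le> 2)
     \<and> (\<forall>K y. 0 \<le> (\<Sum>s=1..K. \<Sum>t=1..K. \<sigma> s t * y s * y t))"

lemma adj_sym: "simple_graph_on n E \<Longrightarrow> adj E u v = adj E v u"
  unfolding simple_graph_on_def adj_def by metis

lemma adj_01: "adj E u v = 0 \<or> adj E u v = 1"
  unfolding adj_def by auto

lemma adj_out: "simple_graph_on n E \<Longrightarrow> u \<notin> {1..n} \<Longrightarrow> adj E u v = 0"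
  unfolding simple_graph_on_def adj_def by auto

lemma card_edges:
  assumes g: "simple_graph_on n E"
  shows "(\<Sum>s=1..n. \<Sum>v=1..n. adj E s v) = 2 * real (num_edges n E)"
proof -
  define D where "D = {p \<in> {1..n} \<times> {1..n}. E (fst p) (snd p)}"
  define L where "L = {(u, v). u \<in> {1..n} \<and> v \<in> {1..n} \<and> u < v \<and> E u v}"
  define U where "U = {(u, v). u \<in> {1..n} \<and> v \<in> {1..n} \<and> v < u \<and> E u v}"
  have fL: "finite L" unfolding L_def by (rule finite_subset[of _ "{1..n} \<times> {1..n}"]) auto
  have fU: "finite U" unfolding U_def by (rule finite_subset[of _ "{1..n} \<times> {1..n}"]) auto
  have irr: "\<not> E u u" for u using g unfolding simple_graph_on_def by auto
  have sym: "E u v \<longleftrightarrow> E v u" for u v using g unfolding simple_graph_on_def by auto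
  have DLU: "D = L \<union> U" unfolding D_def L_def U_def by (auto simp: neq_iff) (metis irr linorder_neqE_nat)
  have "U = (\<lambda>(u, v). (v, u)) ` L" unfolding U_def L_def using sym by (auto simp: image_iff)
  moreover have "inj_on (\<lambda>(u, v). (v, u)) L" by (auto simp: inj_on_def)
  ultimately have cU: "card U = card L" by (simp add: card_image)
  have disj: "L \<inter> U = {}" unfolding L_def U_def by auto
  have cD: "card D = 2 * card L" unfolding DLU using card_Un_disjoint[OF fL fU disj] cU by simp
  have "(\<Sum>s=1..n. \<Sum>v=1..n. adj E s v) = (\<Sum>p\<in>{1..n} \<times> {1..n}. adj E (fst p) (snd p))"
    by (simp add: sum.cartesian_product split_beta)
  also have "\<dots> = (\<Sum>p\<in>{1..n} \<times> {1..n}. if E (fst p) (snd p) then 1 else 0)"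
    unfolding adj_def by simp
  also have "\<dots> = real (card D)" unfolding D_def
    by (simp add: sum.If_cases Int_def)
  finally show ?thesis using cD unfolding num_edges_def L_def by simp
qed

lemma good_sigma_from_graph:
  fixes G :: "nat \<Rightarrow> nat \<Rightarrow> nat \<Rightarrow> bool" and \<sigma> :: "nat \<Rightarrow> nat \<Rightarrow> real"
  assumes gr: "\<And>n. in_script_G n (G n)" and cd: "codegree_condition G \<sigma>"
  shows "good_sigma \<sigma>"
proof -
  have sg: "simple_graph_on n (G n)" for n using gr[of n] unfolding in_script_G_def by auto
  have symG: "G n u v \<longleftrightarrow> G n v u" for n u v using sg[of n] unfolding simple_graph_on_def by auto
  define e where "e n = real (num_edges n (G n))" for n
  define c where "c n s t = (\<Sum>v = 1..n. adj (G n) s v * adj (G n) v t)" for n s t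
  have lim: "(\<lambda>n. c n s t / e n) \<longlonglongrightarrow> \<sigma> s t" if "1 \<le> s" "1 \<le> t" for s t
    using cd that unfolding codegree_condition_def c_def e_def by auto
  have e0: "0 \<le> e n" for n unfolding e_def by simp
  have csym: "c n s t = c n t s" for n s t
    unfolding c_def by (intro sum.cong refl) (simp add: adj_sym[OF sg] mult.commute)
  have cnn: "0 \<le> c n s t" for n s t unfolding c_def adj_def by (auto intro: sum_nonneg)
  have css: "c n s s = (\<Sum>v = 1..n. adj (G n) s v)" for n s
    unfolding c_def by (intro sum.cong refl) (auto simp: adj_def symG)
  have cle: "c n s t \<le> c n s s" for n s t
    unfolding css unfolding c_def by (intro sum_mono) (auto simp: adj_def)
  have P1: "\<sigma> s t = \<sigma> t s" if "1 \<le> s" "1 \<le> t" for s t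
    using lim[OF that] lim[OF that(2,1)] unfolding csym[of _ t s] by (rule LIMSEQ_unique)
  have P2: "0 \<le> \<sigma> s t" if "1 \<le> s" "1 \<le> t" for s t
    by (rule LIMSEQ_le_const[OF lim[OF that]]) (auto intro!: divide_nonneg_nonneg cnn e0)
  have P3: "\<sigma> s t \<le> \<sigma> s s" if "1 \<le> s" "1 \<le> t" for s t
    by (rule LIMSEQ_le[OF lim[OF that] lim[OF that(1,1)]]) (auto intro!: divide_right_mono cle e0)
  have P4: "(\<Sum>s=1..K. \<sigma> s s) \<le> 2" for K
  proof -
    have "(\<lambda>n. \<Sum>s=1..K. c n s s / e n) \<longlonglongrightarrow> (\<Sum>s=1..K. \<sigma> s s)"
      by (intro tendsto_sum lim) auto
    moreover have "(\<Sum>s=1..K. c n s s / e n) \<le> 2" for n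
    proof -
      have "(\<Sum>s=1..K. c n s s) \<le> (\<Sum>s\<in>{1..K} \<union> {1..n}. c n s s)"
        by (intro sum_mono2 cnn) auto
      also have "\<dots> = (\<Sum>s=1..n. c n s s)"
        by (rule sum.mono_neutral_left[symmetric]) (auto simp: css adj_out[OF sg])
      also have "\<dots> = 2 * e n" unfolding css e_def by (rule card_edges[OF sg])
      finally have le: "(\<Sum>s=1..K. c n s s) \<le> 2 * e n" .
      have "(\<Sum>s=1..K. c n s s / e n) = (\<Sum>s=1..K. c n s s) / e n" by (simp add: sum_divide_distrib)
      also have "\<dots> \<le> 2"
      proof (cases "e n = 0")
        case False
        then have "0 < e n" using e0[of n] by simp
        then show ?thesis using le by (simp add: divide_le_eq)
      qed simp
      finally show ?thesis .
    qed
    ultimately show ?thesis by (intro LIMSEQ_le_const2) auto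
  qed
  have P5: "0 \<le> (\<Sum>s=1..K. \<Sum>t=1..K. \<sigma> s t * y s * y t)" for K y
  proof -
    have "(\<lambda>n. \<Sum>s=1..K. \<Sum>t=1..K. c n s t / e n * y s * y t) \<longlonglongrightarrow> (\<Sum>s=1..K. \<Sum>t=1..K. \<sigma> s t * y s * y t)"
      by (intro tendsto_sum tendsto_mult_right lim) auto
    moreover have "0 \<le> (\<Sum>s=1..K. \<Sum>t=1..K. c n s t / e n * y s * y t)" for n
    proof -
      have "(\<Sum>s=1..K. \<Sum>t=1..K. c n s t / e n * y s * y t)
          = (\<Sum>s=1..K. \<Sum>t=1..K. \<Sum>v=1..n. (adj (G n) v s * y s) * (adj (G n) v t * y t)) / e n"
      proof -
        have t: "c n s t / e n * y s * y t = (\<Sum>v=1..n. (adj (G n) v s * y s) * (adj (G n) v t * y t)) / e n" for s t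
        proof -
          have "c n s t * y s * y t = (\<Sum>v=1..n. (adj (G n) v s * y s) * (adj (G n) v t * y t))"
            unfolding c_def sum_distrib_right by (intro sum.cong refl) (simp add: adj_sym[OF sg, of n s] ac_simps)
          then show ?thesis by simp
        qed
        show ?thesis unfolding t by (simp add: sum_divide_distrib)
      qed
      also have "\<dots> = (\<Sum>v=1..n. (\<Sum>s=1..K. adj (G n) v s * y s) * (\<Sum>t=1..K. adj (G n) v t * y t)) / e n"
      proof -
        have "(\<Sum>s=1..K. \<Sum>t=1..K. \<Sum>v=1..n. (adj (G n) v s * y s) * (adj (G n) v t * y t))
            = (\<Sum>s=1..K. \<Sum>v=1..n. \<Sum>t=1..K. (adj (G n) v s * y s) * (adj (G n) v t * y t))"
          by (simp only: sum.swap[of _ "{1..K}" "{1..n}"])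
        also have "\<dots> = (\<Sum>v=1..n. \<Sum>s=1..K. \<Sum>t=1..K. (adj (G n) v s * y s) * (adj (G n) v t * y t))"
          by (rule sum.swap)
        also have "\<dots> = (\<Sum>v=1..n. (\<Sum>s=1..K. adj (G n) v s * y s) * (\<Sum>t=1..K. adj (G n) v t * y t))"
          by (simp add: sum_product)
        finally show ?thesis by simp
      qed
      also have "0 \<le> \<dots>"
        by (intro divide_nonneg_nonneg sum_nonneg e0) (simp add: zero_le_square)
      finally show ?thesis .
    qed
    ultimately show ?thesis by (intro LIMSEQ_le_const) auto
  qed
  show ?thesis unfolding good_sigma_def using P1 P2 P3 P4 P5 by blast
qed


lemma mono_bdd_cauchy:
  fixes f :: "nat \<Rightarrow> real"
  assumes mono: "\<And>K L. K \<le> L \<Longrightarrow> f K \<le> f L" and bdd: "\<And>K. f K \<le> B" and e: "e > 0"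
  shows "\<exists>N. \<forall>K L. N \<le> K \<longrightarrow> K \<le> L \<longrightarrow> f L - f K < e"
proof -
  have "Bseq f"
  proof (rule BseqI')
    fix n
    show "norm (f n) \<le> \<bar>f 0\<bar> + \<bar>B\<bar>" using mono[of 0 n] bdd[of n] by auto
  qed
  then have "convergent f" by (rule Bseq_mono_convergent) (use mono in auto)
  then have "Cauchy f" by (rule convergent_Cauchy)
  from CauchyD[OF this e] obtain M where M: "\<forall>m\<ge>M. \<forall>n\<ge>M. norm (f m - f n) < e" by blast
  show ?thesis
  proof (intro exI allI impI)
    fix K L assume "M \<le> K" "K \<le> L"
    then have "norm (f L - f K) < e" using M by (meson order_trans)
    then show "f L - f K < e" by simp
  qed
qed

definition SQ :: "nat \<Rightarrow> (nat \<times> nat) set" where "SQ K = {1..K} \<times> {1..K}"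

lemma SQ_finite[simp]: "finite (SQ K)" by (simp add: SQ_def)

lemma SQ_mono: "K \<le> L \<Longrightarrow> SQ K \<subseteq> SQ L" by (auto simp: SQ_def)

locale iid_sigma = iid P X for P :: "'a measure" and X +
  fixes \<sigma> :: "nat \<Rightarrow> nat \<Rightarrow> real"
  assumes gs: "good_sigma \<sigma>"
begin

lemma sig_sym: "1 \<le> s \<Longrightarrow> 1 \<le> t \<Longrightarrow> \<sigma> s t = \<sigma> t s"
  and sig_nn: "1 \<le> s \<Longrightarrow> 1 \<le> t \<Longrightarrow> 0 \<le> \<sigma> s t"
  and sig_le: "1 \<le> s \<Longrightarrow> 1 \<le> t \<Longrightarrow> \<sigma> s t \<le> \<sigma> s s"
  and sig_sum: "(\<Sum>s=1..K. \<sigma> s s) \<le> 2"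
  and sig_pos: "0 \<le> (\<Sum>s=1..K. \<Sum>t=1..K. \<sigma> s t * y s * y t)"
  using gs unfolding good_sigma_def by auto

definition Dd :: "nat \<Rightarrow> real" where
  "Dd K = (\<Sum>p\<in>{p\<in>SQ K. fst p = snd p}. \<bar>\<sigma> (fst p) (snd p)\<bar>)"

definition TT :: "nat \<Rightarrow> real" where
  "TT K = (\<Sum>p\<in>SQ K. (\<sigma> (fst p) (snd p))\<^sup>2)"

lemma Dd_eq: "Dd K = (\<Sum>s=1..K. \<sigma> s s)"
proof -
  have "{p\<in>SQ K. fst p = snd p} = (\<lambda>s. (s, s)) ` {1..K}" by (auto simp: SQ_def)
  then have "Dd K = (\<Sum>s=1..K. \<bar>\<sigma> s s\<bar>)" unfolding Dd_def
    by (simp add: sum.reindex inj_on_def)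
  also have "\<dots> = (\<Sum>s=1..K. \<sigma> s s)" by (intro sum.cong refl abs_of_nonneg sig_nn) auto
  finally show ?thesis .
qed

lemma Dd_nn: "0 \<le> Dd K" unfolding Dd_def by (auto intro: sum_nonneg)
lemma Dd_le: "Dd K \<le> 2" unfolding Dd_eq by (rule sig_sum)
lemma Dd_mono: "K \<le> L \<Longrightarrow> Dd K \<le> Dd L"
  unfolding Dd_def by (rule sum_mono2) (auto simp: SQ_def)

lemma TT_nn: "0 \<le> TT K" unfolding TT_def by (auto intro: sum_nonneg)
lemma TT_mono: "K \<le> L \<Longrightarrow> TT K \<le> TT L"
  unfolding TT_def by (rule sum_mono2) (auto simp: SQ_def)
lemma TT_le: "TT K \<le> 4"
proof -
  have "TT K \<le> (\<Sum>p\<in>SQ K. \<sigma> (fst p) (fst p) * \<sigma> (snd p) (snd p))"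
    unfolding TT_def
  proof (intro sum_mono)
    fix p assume "p \<in> SQ K"
    then have p: "1 \<le> fst p" "1 \<le> snd p" by (auto simp: SQ_def)
    have "(\<sigma> (fst p) (snd p))\<^sup>2 = \<sigma> (fst p) (snd p) * \<sigma> (snd p) (fst p)"
      using sig_sym[OF p] by (simp add: power2_eq_square)
    also have "\<dots> \<le> \<sigma> (fst p) (fst p) * \<sigma> (snd p) (snd p)"
      by (intro mult_mono sig_le sig_nn p)
    finally show "(\<sigma> (fst p) (snd p))\<^sup>2 \<le> \<sigma> (fst p) (fst p) * \<sigma> (snd p) (snd p)" .
  qed
  also have "\<dots> = (\<Sum>s=1..K. \<sigma> s s) * (\<Sum>t=1..K. \<sigma> t t)"
    unfolding SQ_def by (simp add: sum_product sum.cartesian_product split_beta)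
  also have "\<dots> \<le> 2 * 2"
    by (intro mult_mono sig_sum) (auto intro!: sum_nonneg sig_nn)
  finally show ?thesis by simp
qed

definition Qf :: "(real \<Rightarrow> real) \<Rightarrow> nat \<Rightarrow> 'a \<Rightarrow> real" where
  "Qf \<phi> K x = (\<Sum>p\<in>SQ K. \<sigma> (fst p) (snd p) * \<phi> (X (fst p) x) * \<phi> (X (snd p) x))"

lemma quad_eq: "quad_partial \<sigma> (\<lambda>s x. \<phi> (X s x)) K = Qf \<phi> K"
  unfolding quad_partial_def Qf_def SQ_def
  by (intro ext) (simp add: sum.cartesian_product split_beta)

lemma Qf_nn: "0 \<le> Qf \<phi> K x"
  using sig_pos[where K=K and y="\<lambda>s. \<phi> (X s x)"] quad_eq[of \<phi> K] unfolding quad_partial_def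
  by (metis (no_types, lifting))

lemma Qf_bnd: "bnd borel \<phi> \<Longrightarrow> bnd P (Qf \<phi> K)"
  unfolding Qf_def[abs_def] by (intro bnd_sum SQ_finite bnd_mult bnd_const bndX)

lemma Qf_int: "bnd borel \<phi> \<Longrightarrow> integrable P (Qf \<phi> K)"
  by (intro bnd_integrable Qf_bnd) (auto simp: finite_measure_axioms)

definition normal_fun :: "(real \<Rightarrow> real) \<Rightarrow> bool" where
  "normal_fun \<phi> \<longleftrightarrow> bnd borel \<phi> \<and> (\<integral>x. \<phi> (X 1 x) \<partial>P) = 0 \<and> (\<integral>x. (\<phi> (X 1 x))\<^sup>2 \<partial>P) = 1"

lemma Qf_diff:
  assumes "K \<le> L"
  shows "Qf \<phi> L x - Qf \<phi> K x = (\<Sum>p\<in>SQ L - SQ K. \<sigma> (fst p) (snd p) * \<phi> (X (fst p) x) * \<phi> (X (snd p) x))"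
  unfolding Qf_def using SQ_mono[OF assms] by (simp add: sum_diff)

lemma Qf_cauchy_bound:
  assumes n: "normal_fun \<phi>" and KL: "K \<le> L"
  shows "(\<integral>x. \<bar>Qf \<phi> L x - Qf \<phi> K x\<bar> \<partial>P) \<le> (Dd L - Dd K) + 2 * sqrt (TT L - TT K)"
proof -
  have b: "bnd borel \<phi>" and z: "(\<integral>x. \<phi> (X 1 x) \<partial>P) = 0" and o: "(\<integral>x. (\<phi> (X 1 x))\<^sup>2 \<partial>P) = 1"
    using n unfolding normal_fun_def by auto
  have A: "finite (SQ L - SQ K)" "\<And>p. p \<in> SQ L - SQ K \<Longrightarrow> 1 \<le> fst p \<and> 1 \<le> snd p"
    by (auto simp: SQ_def)
  have d1: "(\<Sum>p\<in>{p\<in>SQ L - SQ K. fst p = snd p}. \<bar>\<sigma> (fst p) (snd p)\<bar>) = Dd L - Dd K"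
  proof -
    have "{p\<in>SQ L - SQ K. fst p = snd p} = {p\<in>SQ L. fst p = snd p} - {p\<in>SQ K. fst p = snd p}" by auto
    then show ?thesis unfolding Dd_def using SQ_mono[OF KL] by (simp add: sum_diff subset_iff)
  qed
  have d2: "(\<Sum>p\<in>SQ L - SQ K. (\<sigma> (fst p) (snd p))\<^sup>2) = TT L - TT K"
    unfolding TT_def using SQ_mono[OF KL] by (simp add: sum_diff)
  have abs1: "(\<integral>x. \<bar>\<phi> (X 1 x) * \<phi> (X 1 x)\<bar> \<partial>P) = 1"
    using o by (simp add: power2_eq_square)
  show ?thesis
    unfolding Qf_diff[OF KL]
    using gen_bound[OF A b b z z, of \<sigma>] unfolding d1 d2 abs1 o by simp
qed

lemma Qf_limit:
  assumes n: "normal_fun \<phi>"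
  shows "\<exists>g. g \<in> borel_measurable P \<and> integrable P g \<and> (\<lambda>K. \<integral>x. \<bar>Qf \<phi> K x - g x\<bar> \<partial>P) \<longlonglongrightarrow> 0
            \<and> (AE x in P. 0 \<le> g x)"
proof -
  have b: "bnd borel \<phi>" using n unfolding normal_fun_def by auto
  have "\<exists>g. g \<in> borel_measurable P \<and> integrable P g \<and> (\<lambda>K. \<integral>x. \<bar>Qf \<phi> K x - g x\<bar> \<partial>P) \<longlonglongrightarrow> 0"
  proof (rule L1_complete)
    show "integrable P (Qf \<phi> K)" for K by (rule Qf_int[OF b])
    fix e :: real assume e: "e > 0"
    obtain N1 where N1: "\<forall>K L. N1 \<le> K \<longrightarrow> K \<le> L \<longrightarrow> Dd L - Dd K < e / 2"
      using mono_bdd_cauchy[of Dd 2 "e/2"] Dd_mono Dd_le e by auto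
    obtain N2 where N2: "\<forall>K L. N2 \<le> K \<longrightarrow> K \<le> L \<longrightarrow> TT L - TT K < (e / 4)\<^sup>2"
      using mono_bdd_cauchy[of TT 4 "(e/4)\<^sup>2"] TT_mono TT_le e by auto
    have main: "(\<integral>x. \<bar>Qf \<phi> L x - Qf \<phi> K x\<bar> \<partial>P) < e" if "max N1 N2 \<le> K" "K \<le> L" for K L
    proof -
      have "TT L - TT K < (e/4)\<^sup>2" using N2 that by auto
      moreover have "0 \<le> TT L - TT K" using TT_mono[OF that(2)] by simp
      ultimately have "sqrt (TT L - TT K) < e / 4"
        using e by (metis abs_of_pos divide_pos_pos real_sqrt_abs real_sqrt_less_mono zero_less_numeral)
      moreover have "Dd L - Dd K < e / 2" using N1 that by auto
      ultimately show ?thesis using Qf_cauchy_bound[OF n that(2)] by linarith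
    qed
    show "\<exists>N. \<forall>m\<ge>N. \<forall>n\<ge>N. (\<integral>x. \<bar>Qf \<phi> m x - Qf \<phi> n x\<bar> \<partial>P) < e"
    proof (intro exI allI impI)
      fix m n assume mn: "max N1 N2 \<le> m" "max N1 N2 \<le> n"
      show "(\<integral>x. \<bar>Qf \<phi> m x - Qf \<phi> n x\<bar> \<partial>P) < e"
      proof (cases "n \<le> m")
        case True then show ?thesis using main[OF mn(2) True] by simp
      next
        case False
        then have "m \<le> n" by simp
        from main[OF mn(1) this] show ?thesis by (simp add: abs_minus_commute)
      qed
    qed
  qed
  then obtain g where g: "g \<in> borel_measurable P" "integrable P g" "(\<lambda>K. \<integral>x. \<bar>Qf \<phi> K x - g x\<bar> \<partial>P) \<longlonglongrightarrow> 0"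
    by blast
  have "AE x in P. 0 \<le> g x"
    by (rule L1_nonneg[OF sequentially_bot g(2) _ g(3)])
       (intro always_eventually allI conjI Qf_int[OF b] AE_I2 Qf_nn)
  with g show ?thesis by blast
qed

end


context iid_sigma begin

lemma one_term_bound:
  assumes g: "bnd borel g" "bnd borel h" and z: "(\<integral>x. g (X 1 x) \<partial>P) = 0" "(\<integral>x. h (X 1 x) \<partial>P) = 0"
  shows "(\<integral>x. \<bar>\<Sum>p\<in>SQ K. \<sigma> (fst p) (snd p) * g (X (fst p) x) * h (X (snd p) x)\<bar> \<partial>P)
      \<le> 6 * (sqrt (\<integral>x. (g (X 1 x))\<^sup>2 \<partial>P) * sqrt (\<integral>x. (h (X 1 x))\<^sup>2 \<partial>P))"
proof -
  have gm: "(\<lambda>x. g (X 1 x)) \<in> borel_measurable P" "(\<lambda>x. h (X 1 x)) \<in> borel_measurable P"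
    using bnd_meas[OF bndX[OF g(1)]] bnd_meas[OF bndX[OF g(2)]] by auto
  have sq: "integrable P (\<lambda>x. (g (X 1 x))\<^sup>2)" "integrable P (\<lambda>x. (h (X 1 x))\<^sup>2)"
    unfolding power2_eq_square by (intro bnd_integrable bnd_mult bndX g; simp add: finite_measure_axioms)+
  define a where "a = sqrt (\<integral>x. (g (X 1 x))\<^sup>2 \<partial>P)"
  define b where "b = sqrt (\<integral>x. (h (X 1 x))\<^sup>2 \<partial>P)"
  have ab: "0 \<le> a" "0 \<le> b" unfolding a_def b_def by auto
  have cs: "(\<integral>x. \<bar>g (X 1 x) * h (X 1 x)\<bar> \<partial>P) \<le> a * b"
    unfolding a_def b_def by (rule CS_integral(2)[OF gm sq])
  have A: "finite (SQ K)" "\<And>p. p \<in> SQ K \<Longrightarrow> 1 \<le> fst p \<and> 1 \<le> snd p" by (auto simp: SQ_def)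
  have "(\<integral>x. \<bar>\<Sum>p\<in>SQ K. \<sigma> (fst p) (snd p) * g (X (fst p) x) * h (X (snd p) x)\<bar> \<partial>P)
      \<le> Dd K * (\<integral>x. \<bar>g (X 1 x) * h (X 1 x)\<bar> \<partial>P) + 2 * (sqrt (TT K) * a * b)"
    using gen_bound[OF A g z, of \<sigma>] unfolding Dd_def TT_def a_def b_def by simp
  also have "\<dots> \<le> 2 * (a * b) + 2 * (2 * a * b)"
  proof (intro add_mono mult_mono mult_left_mono Dd_le cs mult_right_mono)
    have "sqrt (TT K) \<le> sqrt 4" by (rule real_sqrt_le_mono[OF TT_le])
    then show "sqrt (TT K) \<le> 2" by simp
  qed (use ab Dd_nn TT_nn in \<open>auto intro!: mult_nonneg_nonneg\<close>)
  finally show ?thesis unfolding a_def b_def by simp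
qed

lemma Qf_compare:
  assumes n: "normal_fun \<phi>" "normal_fun \<psi>"
  shows "(\<integral>x. \<bar>Qf \<phi> K x - Qf \<psi> K x\<bar> \<partial>P) \<le> 12 * sqrt (\<integral>x. (\<phi> (X 1 x) - \<psi> (X 1 x))\<^sup>2 \<partial>P)"
proof -
  have b: "bnd borel \<phi>" "bnd borel \<psi>" and z: "(\<integral>x. \<phi> (X 1 x) \<partial>P) = 0" "(\<integral>x. \<psi> (X 1 x) \<partial>P) = 0"
    and o: "(\<integral>x. (\<phi> (X 1 x))\<^sup>2 \<partial>P) = 1" "(\<integral>x. (\<psi> (X 1 x))\<^sup>2 \<partial>P) = 1"
    using n unfolding normal_fun_def by auto
  define \<delta> where "\<delta> y = \<phi> y - \<psi> y" for y
  have bd: "bnd borel \<delta>" unfolding \<delta>_def[abs_def] by (intro bnd_diff b)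
  have zd: "(\<integral>x. \<delta> (X 1 x) \<partial>P) = 0"
    unfolding \<delta>_def using z bndX_int[OF b(1)] bndX_int[OF b(2)] by simp
  define S1 where "S1 x = (\<Sum>p\<in>SQ K. \<sigma> (fst p) (snd p) * \<delta> (X (fst p) x) * \<phi> (X (snd p) x))" for x
  define S2 where "S2 x = (\<Sum>p\<in>SQ K. \<sigma> (fst p) (snd p) * \<psi> (X (fst p) x) * \<delta> (X (snd p) x))" for x
  have eq: "Qf \<phi> K x - Qf \<psi> K x = S1 x + S2 x" for x
    unfolding Qf_def S1_def S2_def \<delta>_def sum_subtractf[symmetric] sum.distrib[symmetric]
    by (intro sum.cong refl) (simp add: algebra_simps)
  have iS: "integrable P (\<lambda>x. \<bar>S1 x\<bar>)" "integrable P (\<lambda>x. \<bar>S2 x\<bar>)"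
    unfolding S1_def S2_def
    by (intro bnd_integrable bnd_abs bnd_sum SQ_finite bnd_mult bnd_const bndX b bd; simp add: finite_measure_axioms)+
  have "(\<integral>x. \<bar>Qf \<phi> K x - Qf \<psi> K x\<bar> \<partial>P) \<le> (\<integral>x. \<bar>S1 x\<bar> + \<bar>S2 x\<bar> \<partial>P)"
    unfolding eq
  proof (rule integral_mono)
    show "integrable P (\<lambda>x. \<bar>S1 x + S2 x\<bar>)"
      unfolding S1_def S2_def
      by (intro bnd_integrable bnd_abs bnd_add bnd_sum SQ_finite bnd_mult bnd_const bndX b bd; simp add: finite_measure_axioms)
  qed (use iS in auto)
  also have "\<dots> = (\<integral>x. \<bar>S1 x\<bar> \<partial>P) + (\<integral>x. \<bar>S2 x\<bar> \<partial>P)" using iS by simp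
  also have "\<dots> \<le> 6 * (sqrt (\<integral>x. (\<delta> (X 1 x))\<^sup>2 \<partial>P) * sqrt (\<integral>x. (\<phi> (X 1 x))\<^sup>2 \<partial>P))
              + 6 * (sqrt (\<integral>x. (\<psi> (X 1 x))\<^sup>2 \<partial>P) * sqrt (\<integral>x. (\<delta> (X 1 x))\<^sup>2 \<partial>P))"
    unfolding S1_def S2_def by (intro add_mono one_term_bound bd b zd z)
  also have "\<dots> = 12 * sqrt (\<integral>x. (\<phi> (X 1 x) - \<psi> (X 1 x))\<^sup>2 \<partial>P)"
    unfolding o \<delta>_def by simp
  finally show ?thesis .
qed

lemma limit_compare:
  assumes n: "normal_fun \<phi>" "normal_fun \<psi>"
    and g1: "integrable P g1" "(\<lambda>K. \<integral>x. \<bar>Qf \<phi> K x - g1 x\<bar> \<partial>P) \<longlonglongrightarrow> 0"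
    and g2: "integrable P g2" "(\<lambda>K. \<integral>x. \<bar>Qf \<psi> K x - g2 x\<bar> \<partial>P) \<longlonglongrightarrow> 0"
  shows "(\<integral>x. \<bar>g1 x - g2 x\<bar> \<partial>P) \<le> 12 * sqrt (\<integral>x. (\<phi> (X 1 x) - \<psi> (X 1 x))\<^sup>2 \<partial>P)"
proof -
  define d where "d = 12 * sqrt (\<integral>x. (\<phi> (X 1 x) - \<psi> (X 1 x))\<^sup>2 \<partial>P)"
  have b: "bnd borel \<phi>" "bnd borel \<psi>" using n unfolding normal_fun_def by auto
  have iQ: "integrable P (Qf \<phi> K)" "integrable P (Qf \<psi> K)" for K using Qf_int b by auto
  have lim: "(\<lambda>K. (\<integral>x. \<bar>Qf \<phi> K x - g1 x\<bar> \<partial>P) + d + (\<integral>x. \<bar>Qf \<psi> K x - g2 x\<bar> \<partial>P)) \<longlonglongrightarrow> 0 + d + 0"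
    by (intro tendsto_add g1(2) g2(2) tendsto_const)
  have bound: "(\<integral>x. \<bar>g1 x - g2 x\<bar> \<partial>P) \<le> (\<integral>x. \<bar>Qf \<phi> K x - g1 x\<bar> \<partial>P) + d + (\<integral>x. \<bar>Qf \<psi> K x - g2 x\<bar> \<partial>P)" for K
  proof -
    have "(\<integral>x. \<bar>g1 x - g2 x\<bar> \<partial>P) \<le> (\<integral>x. \<bar>Qf \<phi> K x - g1 x\<bar> + \<bar>Qf \<phi> K x - Qf \<psi> K x\<bar> + \<bar>Qf \<psi> K x - g2 x\<bar> \<partial>P)"
      by (intro integral_mono) (auto simp: iQ g1(1) g2(1))
    also have "\<dots> = (\<integral>x. \<bar>Qf \<phi> K x - g1 x\<bar> \<partial>P) + (\<integral>x. \<bar>Qf \<phi> K x - Qf \<psi> K x\<bar> \<partial>P) + (\<integral>x. \<bar>Qf \<psi> K x - g2 x\<bar> \<partial>P)"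
      by (simp add: iQ g1(1) g2(1))
    also have "\<dots> \<le> (\<integral>x. \<bar>Qf \<phi> K x - g1 x\<bar> \<partial>P) + d + (\<integral>x. \<bar>Qf \<psi> K x - g2 x\<bar> \<partial>P)"
      unfolding d_def using Qf_compare[OF n] by simp
    finally show ?thesis .
  qed
  have "(\<integral>x. \<bar>g1 x - g2 x\<bar> \<partial>P) \<le> 0 + d + 0"
    using LIMSEQ_le_const[OF lim, of "\<integral>x. \<bar>g1 x - g2 x\<bar> \<partial>P"] bound by blast
  then show ?thesis unfolding d_def by simp
qed

end


locale setting = iid_sigma P X \<sigma> for P :: "'a measure" and X \<sigma> +
  assumes sq: "integrable P (\<lambda>x. (X 1 x)\<^sup>2)"
    and m0: "(\<integral>x. X 1 x \<partial>P) = 0"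
    and v1: "(\<integral>x. (X 1 x)\<^sup>2 \<partial>P) = 1"
begin

definition u :: "real \<Rightarrow> real \<Rightarrow> real" where
  "u M y = y * indicator {y. \<bar>y\<bar> \<le> M} y"

definition phi :: "real \<Rightarrow> real \<Rightarrow> real" where
  "phi M y = (u M y - trunc_mean P X M) / sqrt (trunc_var P X M)"

lemma u_alt: "u M y = (if \<bar>y\<bar> \<le> M then y else 0)"
  unfolding u_def by (simp add: indicator_def)

lemma u_meas[measurable]: "u M \<in> borel_measurable borel"
  unfolding u_alt[abs_def] by measurable

lemma u_bound: "\<bar>u M y\<bar> \<le> \<bar>M\<bar>"
  unfolding u_alt by auto

lemma u_le: "\<bar>u M y\<bar> \<le> \<bar>y\<bar>"
  unfolding u_alt by auto

lemma bnd_u: "bnd borel (u M)"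
  unfolding bnd_def using u_bound by auto

lemma bnd_phi: "bnd borel (phi M)"
  unfolding phi_def[abs_def] by (intro bnd_mult[of _ _ "\<lambda>_. inverse (sqrt (trunc_var P X M))", simplified divide_inverse[symmetric]] bnd_diff bnd_u bnd_const)

lemma trunc_std_eq: "trunc_std P X M = (\<lambda>s x. phi M (X s x))"
  unfolding trunc_std_def phi_def u_def by (intro ext) simp

lemma mean_u: "(\<integral>x. u M (X 1 x) \<partial>P) = trunc_mean P X M"
  unfolding trunc_mean_def u_def ..

lemma var_u: "trunc_var P X M = (\<integral>x. (u M (X 1 x) - trunc_mean P X M)\<^sup>2 \<partial>P)"
  unfolding trunc_var_def u_def ..

lemma X1m[measurable]: "X 1 \<in> borel_measurable P" by simp

lemma X1_int: "integrable P (X 1)"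
  by (rule finite_measure.square_integrable_imp_integrable[OF finite_measure_axioms X1m sq])

lemma int_u: "integrable P (\<lambda>x. u M (X 1 x))" by (intro bndX_int bnd_u)
lemma int_u2: "integrable P (\<lambda>x. (u M (X 1 x))\<^sup>2)"
  unfolding power2_eq_square by (intro bnd_integrable bnd_mult bndX bnd_u) (simp add: finite_measure_axioms)

lemma int_bndX: assumes "bnd P f" shows "integrable P (\<lambda>x. f x * X 1 x)"
proof -
  obtain B where B: "\<forall>x\<in>space P. \<bar>f x\<bar> \<le> B" and fm: "f \<in> borel_measurable P"
    using assms unfolding bnd_def by auto
  show ?thesis
  proof (rule Bochner_Integration.integrable_bound)
    show "integrable P (\<lambda>x. B * \<bar>X 1 x\<bar>)" using X1_int by auto
    show "AE x in P. norm (f x * X 1 x) \<le> norm (B * \<bar>X 1 x\<bar>)"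
    proof (intro AE_I2)
      fix x assume x: "x \<in> space P"
      have "\<bar>f x * X 1 x\<bar> = \<bar>f x\<bar> * \<bar>X 1 x\<bar>" by (simp add: abs_mult)
      also have "\<dots> \<le> B * \<bar>X 1 x\<bar>" using B x by (intro mult_right_mono) auto
      also have "\<dots> \<le> \<bar>B * \<bar>X 1 x\<bar>\<bar>" by simp
      finally show "norm (f x * X 1 x) \<le> norm (B * \<bar>X 1 x\<bar>)" by simp
    qed
  qed (use fm in simp)
qed

lemma normal_phi:
  assumes b: "trunc_var P X M > 0"
  shows "normal_fun (phi M)"
proof -
  define a where "a = trunc_mean P X M"
  define s where "s = sqrt (trunc_var P X M)"
  have s2: "s\<^sup>2 = trunc_var P X M" unfolding s_def using b by simp
  have "(\<integral>x. phi M (X 1 x) \<partial>P) = (\<integral>x. u M (X 1 x) - a \<partial>P) / s"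
    unfolding phi_def a_def s_def by simp
  also have "\<dots> = 0" using int_u mean_u unfolding a_def by (simp add: prob_space)
  finally have z: "(\<integral>x. phi M (X 1 x) \<partial>P) = 0" .
  have "(\<integral>x. (phi M (X 1 x))\<^sup>2 \<partial>P) = (\<integral>x. (u M (X 1 x) - a)\<^sup>2 \<partial>P) / s\<^sup>2"
    unfolding phi_def a_def s_def by (simp add: power_divide)
  also have "\<dots> = 1" unfolding s2 var_u[of M, symmetric] a_def using b by simp
  finally show ?thesis unfolding normal_fun_def using z bnd_phi by auto
qed

lemma abs_X1_int: "integrable P (\<lambda>x. \<bar>X 1 x\<bar>)" using X1_int by auto

lemma lim_a: "((\<lambda>M. trunc_mean P X M) \<longlongrightarrow> 0) at_top"
proof -
  have "((\<lambda>M. \<integral>x. u M (X 1 x) \<partial>P) \<longlongrightarrow> (\<integral>x. X 1 x \<partial>P)) at_top"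
  proof (rule integral_dominated_convergence_at_top[OF X1m _ abs_X1_int])
    show "\<And>t. (\<lambda>x. u t (X 1 x)) \<in> borel_measurable P" by measurable
    show "AE x in P. ((\<lambda>i. u i (X 1 x)) \<longlongrightarrow> X 1 x) at_top"
    proof (intro AE_I2 tendsto_eventually)
      fix x show "\<forall>\<^sub>F i in at_top. u i (X 1 x) = X 1 x"
        using eventually_ge_at_top[of "\<bar>X 1 x\<bar>"] by eventually_elim (simp add: u_alt)
    qed
    show "\<forall>\<^sub>F i in at_top. AE x in P. norm (u i (X 1 x)) \<le> \<bar>X 1 x\<bar>"
      by (intro always_eventually allI AE_I2) (simp add: u_le)
  qed
  then show ?thesis unfolding mean_u m0 .
qed

lemma lim_u2: "((\<lambda>M. \<integral>x. (u M (X 1 x))\<^sup>2 \<partial>P) \<longlongrightarrow> 1) at_top"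
proof -
  have "((\<lambda>M. \<integral>x. (u M (X 1 x))\<^sup>2 \<partial>P) \<longlongrightarrow> (\<integral>x. (X 1 x)\<^sup>2 \<partial>P)) at_top"
  proof (rule integral_dominated_convergence_at_top[OF _ _ sq])
    show "(\<lambda>x. (X 1 x)\<^sup>2) \<in> borel_measurable P" by measurable
    show "\<And>t. (\<lambda>x. (u t (X 1 x))\<^sup>2) \<in> borel_measurable P" by measurable
    show "AE x in P. ((\<lambda>i. (u i (X 1 x))\<^sup>2) \<longlongrightarrow> (X 1 x)\<^sup>2) at_top"
    proof (intro AE_I2 tendsto_eventually)
      fix x show "\<forall>\<^sub>F i in at_top. (u i (X 1 x))\<^sup>2 = (X 1 x)\<^sup>2"
        using eventually_ge_at_top[of "\<bar>X 1 x\<bar>"] by eventually_elim (simp add: u_alt)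
    qed
    show "\<forall>\<^sub>F i in at_top. AE x in P. norm ((u i (X 1 x))\<^sup>2) \<le> (X 1 x)\<^sup>2"
      by (intro always_eventually allI AE_I2) (simp add: u_alt)
  qed
  then show ?thesis unfolding v1 .
qed

lemma b_eq: "trunc_var P X M = (\<integral>x. (u M (X 1 x))\<^sup>2 \<partial>P) - (trunc_mean P X M)\<^sup>2"
proof -
  define a where "a = trunc_mean P X M"
  have "trunc_var P X M = (\<integral>x. (u M (X 1 x))\<^sup>2 - 2 * a * u M (X 1 x) + a\<^sup>2 \<partial>P)"
    unfolding var_u a_def[symmetric] by (intro Bochner_Integration.integral_cong refl) (simp add: power2_diff algebra_simps)
  also have "\<dots> = (\<integral>x. (u M (X 1 x))\<^sup>2 \<partial>P) - 2 * a * (\<integral>x. u M (X 1 x) \<partial>P) + a\<^sup>2"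
    using int_u int_u2 by (simp add: prob_space)
  also have "\<dots> = (\<integral>x. (u M (X 1 x))\<^sup>2 \<partial>P) - a\<^sup>2"
    unfolding mean_u a_def by (simp add: power2_eq_square)
  finally show ?thesis unfolding a_def .
qed

lemma lim_b: "((\<lambda>M. trunc_var P X M) \<longlongrightarrow> 1) at_top"
proof -
  have "((\<lambda>M. (\<integral>x. (u M (X 1 x))\<^sup>2 \<partial>P) - (trunc_mean P X M)\<^sup>2) \<longlongrightarrow> 1 - 0\<^sup>2) at_top"
    by (intro tendsto_diff lim_u2 tendsto_power lim_a)
  then show ?thesis unfolding b_eq[symmetric] by simp
qed

lemma ev_b: "\<forall>\<^sub>F M in at_top. trunc_var P X M > 0"
  using order_tendstoD(1)[OF lim_b, of 0] by simp

lemma int_phiX: "integrable P (\<lambda>x. phi M (X 1 x) * X 1 x)"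
  by (intro int_bndX bndX bnd_phi)

lemma int_e: "integrable P (\<lambda>x. (phi M (X 1 x) - X 1 x)\<^sup>2)"
proof -
  have "integrable P (\<lambda>x. (phi M (X 1 x))\<^sup>2 - 2 * (phi M (X 1 x) * X 1 x) + (X 1 x)\<^sup>2)"
    unfolding power2_eq_square[of "phi M _"]
    by (intro Bochner_Integration.integrable_add Bochner_Integration.integrable_diff
        integrable_mult_right int_phiX sq bnd_integrable bnd_mult bndX bnd_phi)
       (simp add: finite_measure_axioms)
  then show ?thesis by (simp add: power2_diff algebra_simps)
qed

lemma e_eq:
  assumes b: "trunc_var P X M > 0"
  shows "(\<integral>x. (phi M (X 1 x) - X 1 x)\<^sup>2 \<partial>P) = 2 - 2 * (\<integral>x. (u M (X 1 x))\<^sup>2 \<partial>P) / sqrt (trunc_var P X M)"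
proof -
  define a where "a = trunc_mean P X M"
  define s where "s = sqrt (trunc_var P X M)"
  have n: "normal_fun (phi M)" by (rule normal_phi[OF b])
  have o: "(\<integral>x. (phi M (X 1 x))\<^sup>2 \<partial>P) = 1" using n unfolding normal_fun_def by auto
  have i2: "integrable P (\<lambda>x. (phi M (X 1 x))\<^sup>2)"
    unfolding power2_eq_square by (intro bnd_integrable bnd_mult bndX bnd_phi) (simp add: finite_measure_axioms)
  have uX: "u M y * y = (u M y)\<^sup>2" for y by (simp add: u_alt power2_eq_square)
  have "(\<integral>x. phi M (X 1 x) * X 1 x \<partial>P) = (\<integral>x. (u M (X 1 x) * X 1 x - a * X 1 x) / s \<partial>P)"
    unfolding phi_def a_def s_def by (intro Bochner_Integration.integral_cong refl) (simp add: algebra_simps diff_divide_distrib)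
  also have "\<dots> = ((\<integral>x. u M (X 1 x) * X 1 x \<partial>P) - a * (\<integral>x. X 1 x \<partial>P)) / s"
    using int_bndX[OF bndX[OF bnd_u]] X1_int by simp
  also have "\<dots> = (\<integral>x. (u M (X 1 x))\<^sup>2 \<partial>P) / s" unfolding m0 uX by simp
  finally have pX: "(\<integral>x. phi M (X 1 x) * X 1 x \<partial>P) = (\<integral>x. (u M (X 1 x))\<^sup>2 \<partial>P) / s" .
  have "(\<integral>x. (phi M (X 1 x) - X 1 x)\<^sup>2 \<partial>P) = (\<integral>x. (phi M (X 1 x))\<^sup>2 - 2 * (phi M (X 1 x) * X 1 x) + (X 1 x)\<^sup>2 \<partial>P)"
    by (intro Bochner_Integration.integral_cong refl) (simp add: power2_diff algebra_simps)
  also have "\<dots> = (\<integral>x. (phi M (X 1 x))\<^sup>2 \<partial>P) - 2 * (\<integral>x. phi M (X 1 x) * X 1 x \<partial>P) + (\<integral>x. (X 1 x)\<^sup>2 \<partial>P)"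
    using i2 int_phiX sq by simp
  also have "\<dots> = 2 - 2 * (\<integral>x. (u M (X 1 x))\<^sup>2 \<partial>P) / s" unfolding o pX v1 by simp
  finally show ?thesis unfolding s_def .
qed

lemma lim_e: "((\<lambda>M. \<integral>x. (phi M (X 1 x) - X 1 x)\<^sup>2 \<partial>P) \<longlongrightarrow> 0) at_top"
proof -
  have "((\<lambda>M. 2 - 2 * (\<integral>x. (u M (X 1 x))\<^sup>2 \<partial>P) / sqrt (trunc_var P X M)) \<longlongrightarrow> 2 - 2 * 1 / sqrt 1) at_top"
    by (intro tendsto_diff tendsto_const tendsto_divide tendsto_mult lim_u2 tendsto_real_sqrt lim_b) simp
  then have "((\<lambda>M. 2 - 2 * (\<integral>x. (u M (X 1 x))\<^sup>2 \<partial>P) / sqrt (trunc_var P X M)) \<longlongrightarrow> 0) at_top" by simp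
  moreover have "\<forall>\<^sub>F M in at_top. 2 - 2 * (\<integral>x. (u M (X 1 x))\<^sup>2 \<partial>P) / sqrt (trunc_var P X M)
      = (\<integral>x. (phi M (X 1 x) - X 1 x)\<^sup>2 \<partial>P)"
    using ev_b by eventually_elim (rule e_eq[symmetric])
  ultimately show ?thesis by (rule Lim_transform_eventually)
qed

lemma sq_tri: "(a - b)\<^sup>2 \<le> 2 * (a - c)\<^sup>2 + 2 * (b - c)\<^sup>2" for a b c :: real
proof -
  have "2 * (a - c)\<^sup>2 + 2 * (b - c)\<^sup>2 - (a - b)\<^sup>2 = (a + b - 2 * c)\<^sup>2"
    by (simp add: power2_eq_square algebra_simps)
  moreover have "0 \<le> (a + b - 2 * c)\<^sup>2" by simp
  ultimately show ?thesis by linarith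
qed

lemma phi_diff_bound:
  "(\<integral>x. (phi M (X 1 x) - phi M' (X 1 x))\<^sup>2 \<partial>P)
     \<le> 2 * (\<integral>x. (phi M (X 1 x) - X 1 x)\<^sup>2 \<partial>P) + 2 * (\<integral>x. (phi M' (X 1 x) - X 1 x)\<^sup>2 \<partial>P)"
proof -
  have "(\<integral>x. (phi M (X 1 x) - phi M' (X 1 x))\<^sup>2 \<partial>P)
     \<le> (\<integral>x. 2 * (phi M (X 1 x) - X 1 x)\<^sup>2 + 2 * (phi M' (X 1 x) - X 1 x)\<^sup>2 \<partial>P)"
  proof (rule integral_mono)
    show "integrable P (\<lambda>x. (phi M (X 1 x) - phi M' (X 1 x))\<^sup>2)"
      unfolding power2_eq_square by (intro bnd_integrable bnd_mult bnd_diff bndX bnd_phi) (simp add: finite_measure_axioms)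
    show "integrable P (\<lambda>x. 2 * (phi M (X 1 x) - X 1 x)\<^sup>2 + 2 * (phi M' (X 1 x) - X 1 x)\<^sup>2)"
      using int_e by simp
    fix x
    show "(phi M (X 1 x) - phi M' (X 1 x))\<^sup>2 \<le> 2 * (phi M (X 1 x) - X 1 x)\<^sup>2 + 2 * (phi M' (X 1 x) - X 1 x)\<^sup>2"
      by (rule sq_tri)
  qed
  also have "\<dots> = 2 * (\<integral>x. (phi M (X 1 x) - X 1 x)\<^sup>2 \<partial>P) + 2 * (\<integral>x. (phi M' (X 1 x) - X 1 x)\<^sup>2 \<partial>P)"
    using int_e by simp
  finally show ?thesis .
qed

end


context setting begin

definition good_lim :: "(real \<Rightarrow> real) \<Rightarrow> ('a \<Rightarrow> real) \<Rightarrow> bool" where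
  "good_lim \<phi> g \<longleftrightarrow> g \<in> borel_measurable P \<and> integrable P g \<and>
     (\<lambda>K. \<integral>x. \<bar>Qf \<phi> K x - g x\<bar> \<partial>P) \<longlonglongrightarrow> 0 \<and> (AE x in P. 0 \<le> g x)"

definition VM :: "real \<Rightarrow> 'a \<Rightarrow> real" where
  "VM M = (if trunc_var P X M > 0 then (SOME g. good_lim (phi M) g) else (\<lambda>_. 0))"

definition ee :: "real \<Rightarrow> real" where
  "ee M = (\<integral>x. (phi M (X 1 x) - X 1 x)\<^sup>2 \<partial>P)"

lemma ee_nn: "0 \<le> ee M" unfolding ee_def by simp

lemma VM_good: assumes "trunc_var P X M > 0" shows "good_lim (phi M) (VM M)"
proof -
  have "\<exists>g. good_lim (phi M) g"
    using Qf_limit[OF normal_phi[OF assms]] unfolding good_lim_def by blast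
  from someI_ex[OF this] show ?thesis unfolding VM_def using assms by simp
qed

lemma VM_meas[measurable]: "VM M \<in> borel_measurable P"
  using VM_good[of M] unfolding good_lim_def by (cases "trunc_var P X M > 0") (auto simp: VM_def)

lemma VM_int: "integrable P (VM M)"
  using VM_good[of M] unfolding good_lim_def by (cases "trunc_var P X M > 0") (auto simp: VM_def)

lemma VM_nn: "AE x in P. 0 \<le> VM M x"
  using VM_good[of M] unfolding good_lim_def by (cases "trunc_var P X M > 0") (auto simp: VM_def)

lemma VM_L1: assumes "trunc_var P X M > 0"
  shows "L1_conv P (quad_partial \<sigma> (trunc_std P X M)) (VM M) sequentially"
proof -
  have q: "quad_partial \<sigma> (trunc_std P X M) = Qf (phi M)"
    unfolding trunc_std_eq by (intro ext quad_eq)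
  show ?thesis unfolding L1_conv_def q
    using VM_good[OF assms] Qf_int[OF bnd_phi] unfolding good_lim_def by auto
qed

lemma VM_compare:
  assumes "trunc_var P X M > 0" "trunc_var P X M' > 0"
  shows "(\<integral>x. \<bar>VM M x - VM M' x\<bar> \<partial>P) \<le> 12 * sqrt (2 * ee M + 2 * ee M')"
proof -
  have "(\<integral>x. \<bar>VM M x - VM M' x\<bar> \<partial>P) \<le> 12 * sqrt (\<integral>x. (phi M (X 1 x) - phi M' (X 1 x))\<^sup>2 \<partial>P)"
    using VM_good[OF assms(1)] VM_good[OF assms(2)] unfolding good_lim_def
    by (intro limit_compare normal_phi assms) auto
  also have "\<dots> \<le> 12 * sqrt (2 * ee M + 2 * ee M')"
    unfolding ee_def by (intro mult_left_mono real_sqrt_le_mono phi_diff_bound) auto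
  finally show ?thesis .
qed

lemma VM_cauchy:
  assumes e: "e > 0"
  shows "\<exists>M0. \<forall>M M'. M0 \<le> M \<longrightarrow> M0 \<le> M' \<longrightarrow> (\<integral>x. \<bar>VM M x - VM M' x\<bar> \<partial>P) < e"
proof -
  define \<delta> where "\<delta> = (e / 48)\<^sup>2"
  have \<delta>: "\<delta> > 0" unfolding \<delta>_def using e by simp
  obtain M1 where M1: "\<And>M. M \<ge> M1 \<Longrightarrow> trunc_var P X M > 0"
    using ev_b unfolding eventually_at_top_linorder by auto
  have "\<forall>\<^sub>F M in at_top. ee M < \<delta>"
    using order_tendstoD(2)[OF lim_e \<delta>] unfolding ee_def .
  then obtain M2 where M2: "\<And>M. M \<ge> M2 \<Longrightarrow> ee M < \<delta>"
    unfolding eventually_at_top_linorder by auto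
  show ?thesis
  proof (intro exI allI impI)
    fix M M' assume a: "max M1 M2 \<le> M" "max M1 M2 \<le> M'"
    have "(\<integral>x. \<bar>VM M x - VM M' x\<bar> \<partial>P) \<le> 12 * sqrt (2 * ee M + 2 * ee M')"
      using a by (intro VM_compare M1) auto
    also have "sqrt (2 * ee M + 2 * ee M') < sqrt (4 * \<delta>)"
      using M2[of M] M2[of M'] a by (intro real_sqrt_less_mono) auto
    then have "12 * sqrt (2 * ee M + 2 * ee M') < 12 * sqrt (4 * \<delta>)" by simp
    also have "sqrt (4 * \<delta>) = 2 * (e / 48)"
      unfolding \<delta>_def using e by (simp add: real_sqrt_mult)
    finally show "(\<integral>x. \<bar>VM M x - VM M' x\<bar> \<partial>P) < e" using e by simp
  qed
qed

lemma V_exists: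
  "\<exists>V. V \<in> borel_measurable P \<and> integrable P V \<and> L1_conv P VM V at_top \<and> (AE x in P. 0 \<le> V x)"
proof -
  have "\<exists>g. g \<in> borel_measurable P \<and> integrable P g \<and> (\<lambda>n. \<integral>x. \<bar>VM (real n) x - g x\<bar> \<partial>P) \<longlonglongrightarrow> 0"
  proof (rule L1_complete)
    show "integrable P (VM (real n))" for n by (rule VM_int)
    fix e :: real assume "e > 0"
    from VM_cauchy[OF this] obtain M0 where M0: "\<forall>M M'. M0 \<le> M \<longrightarrow> M0 \<le> M' \<longrightarrow> (\<integral>x. \<bar>VM M x - VM M' x\<bar> \<partial>P) < e"
      by blast
    show "\<exists>N. \<forall>m\<ge>N. \<forall>n\<ge>N. (\<integral>x. \<bar>VM (real m) x - VM (real n) x\<bar> \<partial>P) < e"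
    proof (intro exI allI impI)
      fix m n assume "nat \<lceil>M0\<rceil> \<le> m" "nat \<lceil>M0\<rceil> \<le> n"
      then have "M0 \<le> real m" "M0 \<le> real n" by linarith+
      then show "(\<integral>x. \<bar>VM (real m) x - VM (real n) x\<bar> \<partial>P) < e" using M0 by blast
    qed
  qed
  then obtain V where V: "V \<in> borel_measurable P" "integrable P V"
    "(\<lambda>n. \<integral>x. \<bar>VM (real n) x - V x\<bar> \<partial>P) \<longlonglongrightarrow> 0" by blast
  have lim: "((\<lambda>M. \<integral>x. \<bar>VM M x - V x\<bar> \<partial>P) \<longlongrightarrow> 0) at_top"
  proof (rule order_tendstoI)
    fix a :: real assume "a < 0"
    show "\<forall>\<^sub>F M in at_top. a < (\<integral>x. \<bar>VM M x - V x\<bar> \<partial>P)"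
      using \<open>a < 0\<close> by (intro always_eventually allI) (rule less_le_trans[OF _ integral_nonneg_AE]; auto)
  next
    fix e :: real assume e: "0 < e"
    then have e2: "e / 2 > 0" by simp
    from VM_cauchy[OF e2] obtain M0 where M0: "\<forall>M M'. M0 \<le> M \<longrightarrow> M0 \<le> M' \<longrightarrow> (\<integral>x. \<bar>VM M x - VM M' x\<bar> \<partial>P) < e / 2"
      by blast
    from order_tendstoD(2)[OF V(3) e2] obtain n0 where n0: "\<And>n. n \<ge> n0 \<Longrightarrow> (\<integral>x. \<bar>VM (real n) x - V x\<bar> \<partial>P) < e / 2"
      unfolding eventually_sequentially by auto
    define n where "n = max n0 (nat \<lceil>M0\<rceil>)"
    have n: "n \<ge> n0" "M0 \<le> real n" unfolding n_def by linarith+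
    show "\<forall>\<^sub>F M in at_top. (\<integral>x. \<bar>VM M x - V x\<bar> \<partial>P) < e"
      unfolding eventually_at_top_linorder
    proof (intro exI allI impI)
      fix M assume "M0 \<le> M"
      have "(\<integral>x. \<bar>VM M x - V x\<bar> \<partial>P) \<le> (\<integral>x. \<bar>VM M x - VM (real n) x\<bar> + \<bar>VM (real n) x - V x\<bar> \<partial>P)"
        by (intro integral_mono) (auto simp: VM_int V(2))
      also have "\<dots> = (\<integral>x. \<bar>VM M x - VM (real n) x\<bar> \<partial>P) + (\<integral>x. \<bar>VM (real n) x - V x\<bar> \<partial>P)"
        by (simp add: VM_int V(2))
      also have "\<dots> < e / 2 + e / 2"
        using M0 \<open>M0 \<le> M\<close> n n0 by (intro add_strict_mono) auto
      finally show "(\<integral>x. \<bar>VM M x - V x\<bar> \<partial>P) < e" by simp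
    qed
  qed
  have conv: "L1_conv P VM V at_top"
    unfolding L1_conv_def using V(2) lim VM_int by auto
  have "AE x in P. 0 \<le> V x"
    by (rule L1_nonneg[OF _ V(2) _ lim]) (auto intro: always_eventually VM_int VM_nn)
  with V conv show ?thesis by blast
qed

end


lemma sqrt_sq_abs: "(sqrt a)\<^sup>2 = \<bar>a\<bar>"
proof (cases "a \<ge> 0")
  case False
  then have "sqrt a = - sqrt (- a)" by (simp add: real_sqrt_minus)
  then show ?thesis using False by simp
qed simp

lemma std_normal_prob: "prob_space std_normal_distribution"
  using real_dist_normal_dist by (simp add: real_distribution_def)

lemma pair_prob:
  assumes "prob_space P" "A \<in> borel_measurable P"
  shows "prob_space (distr P borel A \<Otimes>\<^sub>M std_normal_distribution)"
  by (intro prob_space_pair prob_space.prob_space_distr assms std_normal_prob)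

lemma mix_map_meas[measurable]:
  "(\<lambda>(a, w). sqrt a * w) \<in> borel_measurable (distr P borel A \<Otimes>\<^sub>M std_normal_distribution)"
  by measurable

lemma normal_mix_real_dist:
  assumes "prob_space P" "A \<in> borel_measurable P"
  shows "real_distribution (normal_mix P A)"
  unfolding normal_mix_def
  by (intro prob_space.real_distribution_distr pair_prob assms mix_map_meas)

lemma char_normal_mix:
  assumes P: "prob_space P" and A[measurable]: "A \<in> borel_measurable P"
  shows "char (normal_mix P A) t = complex_of_real (\<integral>x. exp (- (t\<^sup>2 * \<bar>A x\<bar>) / 2) \<partial>P)"
proof -
  let ?N = "std_normal_distribution"
  let ?mu = "distr P borel A"
  have pmu: "prob_space ?mu" by (intro prob_space.prob_space_distr P A)
  have psf: "pair_sigma_finite ?mu ?N"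
    by (intro pair_sigma_finite.intro prob_space_imp_sigma_finite pmu std_normal_prob)
  interpret pp: prob_space "?mu \<Otimes>\<^sub>M ?N" by (rule pair_prob[OF P A])
  have intg: "integrable (?mu \<Otimes>\<^sub>M ?N) (\<lambda>z. iexp (t * (case z of (a, w) \<Rightarrow> sqrt a * w)))"
    by (intro pp.integrable_const_bound[where B=1]) (auto simp: norm_exp_i_times)
  have "char (normal_mix P A) t = (CLINT z | ?mu \<Otimes>\<^sub>M ?N. iexp (t * (case z of (a, w) \<Rightarrow> sqrt a * w)))"
    unfolding char_def normal_mix_def by (rule integral_distr) auto
  also have "\<dots> = (CLINT a | ?mu. CLINT w | ?N. iexp (t * (sqrt a * w)))"
    using pair_sigma_finite.integral_fst'[OF psf intg] by simp
  also have "\<dots> = (CLINT a | ?mu. complex_of_real (exp (- (t\<^sup>2 * \<bar>a\<bar>) / 2)))"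
  proof (intro Bochner_Integration.integral_cong refl)
    fix a
    have "(CLINT w | ?N. iexp (t * (sqrt a * w))) = char ?N (t * sqrt a)"
      unfolding char_def by (simp add: mult.assoc)
    also have "\<dots> = complex_of_real (exp (- ((t * sqrt a)\<^sup>2) / 2))"
      by (simp add: char_std_normal_distribution)
    also have "(t * sqrt a)\<^sup>2 = t\<^sup>2 * \<bar>a\<bar>" by (simp add: power_mult_distrib sqrt_sq_abs)
    finally show "(CLINT w | ?N. iexp (t * (sqrt a * w))) = complex_of_real (exp (- (t\<^sup>2 * \<bar>a\<bar>) / 2))" .
  qed
  also have "\<dots> = complex_of_real (\<integral>a. exp (- (t\<^sup>2 * \<bar>a\<bar>) / 2) \<partial>?mu)"
    by (rule integral_complex_of_real)
  also have "(\<integral>a. exp (- (t\<^sup>2 * \<bar>a\<bar>) / 2) \<partial>?mu) = (\<integral>x. exp (- (t\<^sup>2 * \<bar>A x\<bar>) / 2) \<partial>P)"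
    by (rule integral_distr) auto
  finally show ?thesis .
qed

lemma exp_lip:
  fixes u v :: real
  assumes "u \<le> 0" "v \<le> 0"
  shows "\<bar>exp u - exp v\<bar> \<le> \<bar>u - v\<bar>"
proof -
  have key: "exp b - exp a \<le> b - a" if "a \<le> b" "b \<le> 0" for a b :: real
  proof -
    have "exp a = exp b * exp (a - b)" by (simp add: exp_diff)
    then have "exp b - exp a = exp b * (1 - exp (a - b))" by (simp add: algebra_simps)
    also have "\<dots> \<le> 1 - exp (a - b)"
      using that mult_right_mono[of "exp b" 1 "1 - exp (a - b)"] by simp
    also have "\<dots> \<le> b - a" using exp_ge_add_one_self[of "a - b"] by linarith
    finally show ?thesis .
  qed
  show ?thesis
  proof (cases "u \<le> v")
    case True
    with key[OF True assms(2)] show ?thesis by simp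
  next
    case False
    with key[of v u] assms show ?thesis by simp
  qed
qed

lemma exp_abs_lip:
  fixes c a b :: real
  assumes "0 \<le> c"
  shows "\<bar>exp (- (c * \<bar>a\<bar>)) - exp (- (c * \<bar>b\<bar>))\<bar> \<le> c * \<bar>a - b\<bar>"
proof -
  have "\<bar>exp (- (c * \<bar>a\<bar>)) - exp (- (c * \<bar>b\<bar>))\<bar> \<le> \<bar>- (c * \<bar>a\<bar>) - - (c * \<bar>b\<bar>)\<bar>"
    using assms by (intro exp_lip) auto
  also have "- (c * \<bar>a\<bar>) - - (c * \<bar>b\<bar>) = c * (\<bar>b\<bar> - \<bar>a\<bar>)" by (simp add: algebra_simps)
  also have "\<bar>c * (\<bar>b\<bar> - \<bar>a\<bar>)\<bar> = c * \<bar>\<bar>b\<bar> - \<bar>a\<bar>\<bar>" using assms by (simp add: abs_mult)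
  also have "\<dots> \<le> c * \<bar>b - a\<bar>" using assms by (intro mult_left_mono abs_triangle_ineq3) auto
  also have "\<bar>b - a\<bar> = \<bar>a - b\<bar>" by (rule abs_minus_commute)
  finally show ?thesis .
qed


lemma normal_mix_sq:
  assumes P: "prob_space P" and A[measurable]: "A \<in> borel_measurable P" and Ai: "integrable P A"
  shows "integrable (normal_mix P A) (\<lambda>y. y\<^sup>2)"
proof (rule integrableI_bounded)
  let ?N = "std_normal_distribution"
  let ?mu = "distr P borel A"
  show "(\<lambda>y. y\<^sup>2) \<in> borel_measurable (normal_mix P A)" unfolding normal_mix_def by simp
  have sfN: "sigma_finite_measure ?N" by (intro prob_space_imp_sigma_finite std_normal_prob)
  have N2: "(\<integral>\<^sup>+w. ennreal (w\<^sup>2) \<partial>?N) = 1"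
  proof -
    have i: "integrable ?N (\<lambda>x. x ^ (2 * 1))" and e: "(\<integral>x. x ^ (2 * 1) \<partial>?N) = fact (2 * 1) / (2 ^ 1 * fact 1)"
      using std_normal_distribution_even_moments[of 1] by auto
    have "(\<integral>\<^sup>+w. ennreal (w\<^sup>2) \<partial>?N) = ennreal (\<integral>w. w\<^sup>2 \<partial>?N)"
      using i by (intro nn_integral_eq_integral) auto
    also have "(\<integral>w. w\<^sup>2 \<partial>?N) = 1" using e by simp
    finally show ?thesis by simp
  qed
  have "(\<integral>\<^sup>+y. ennreal (norm (y\<^sup>2)) \<partial>normal_mix P A)
      = (\<integral>\<^sup>+z. ennreal ((case z of (a, w) \<Rightarrow> sqrt a * w)\<^sup>2) \<partial>(?mu \<Otimes>\<^sub>M ?N))"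
    unfolding normal_mix_def by (subst nn_integral_distr) auto
  also have "\<dots> = (\<integral>\<^sup>+a. \<integral>\<^sup>+w. ennreal ((sqrt a * w)\<^sup>2) \<partial>?N \<partial>?mu)"
    by (subst sigma_finite_measure.nn_integral_fst[OF sfN, symmetric]) auto
  also have "\<dots> = (\<integral>\<^sup>+a. ennreal \<bar>a\<bar> \<partial>?mu)"
  proof (intro nn_integral_cong)
    fix a
    have "(\<integral>\<^sup>+w. ennreal ((sqrt a * w)\<^sup>2) \<partial>?N) = (\<integral>\<^sup>+w. ennreal \<bar>a\<bar> * ennreal (w\<^sup>2) \<partial>?N)"
      by (intro nn_integral_cong) (simp add: power_mult_distrib sqrt_sq_abs ennreal_mult)
    also have "\<dots> = ennreal \<bar>a\<bar> * (\<integral>\<^sup>+w. ennreal (w\<^sup>2) \<partial>?N)"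
      by (rule nn_integral_cmult) auto
    finally show "(\<integral>\<^sup>+w. ennreal ((sqrt a * w)\<^sup>2) \<partial>?N) = ennreal \<bar>a\<bar>" using N2 by simp
  qed
  also have "\<dots> = (\<integral>\<^sup>+x. ennreal \<bar>A x\<bar> \<partial>P)"
    by (subst nn_integral_distr) auto
  also have "\<dots> = ennreal (\<integral>x. \<bar>A x\<bar> \<partial>P)"
    using Ai by (intro nn_integral_eq_integral) auto
  also have "\<dots> < \<infinity>" by simp
  finally show "(\<integral>\<^sup>+y. ennreal (norm (y\<^sup>2)) \<partial>normal_mix P A) < \<infinity>" .
qed

lemma weak_conv_mix:
  assumes P: "prob_space P" and VMm: "\<And>M. VM M \<in> borel_measurable P" and Vm: "V \<in> borel_measurable P"
    and L1: "L1_conv P VM V at_top"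
  shows "weak_conv_at_top (\<lambda>M. normal_mix P (VM M)) (normal_mix P V)"
  unfolding weak_conv_at_top_def
proof (intro allI impI)
  fix Ms :: "nat \<Rightarrow> real" assume Ms: "filterlim Ms at_top sequentially"
  interpret p: prob_space P by (rule P)
  have Vi: "integrable P V" and lim: "((\<lambda>M. \<integral>x. \<bar>VM M x - V x\<bar> \<partial>P) \<longlongrightarrow> 0) at_top"
    using L1 unfolding L1_conv_def by auto
  have limk: "(\<lambda>k. \<integral>x. \<bar>VM (Ms k) x - V x\<bar> \<partial>P) \<longlonglongrightarrow> 0"
    by (rule filterlim_compose[OF lim Ms])
  have evint: "\<forall>\<^sub>F k in sequentially. integrable P (VM (Ms k))"
    using L1 unfolding L1_conv_def by (auto intro: eventually_compose_filterlim[OF _ Ms])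
  show "weak_conv_m (\<lambda>k. normal_mix P (VM (Ms k))) (normal_mix P V)"
  proof (rule levy_continuity)
    show "real_distribution (normal_mix P (VM (Ms k)))" for k by (intro normal_mix_real_dist P VMm)
    show "real_distribution (normal_mix P V)" by (intro normal_mix_real_dist P Vm)
    fix t :: real
    define c where "c = t\<^sup>2 / 2"
    have c: "0 \<le> c" unfolding c_def by simp
    have eq: "exp (- (t\<^sup>2 * \<bar>a\<bar>) / 2) = exp (- (c * \<bar>a\<bar>))" for a unfolding c_def by simp
    have ie: "integrable P (\<lambda>x. exp (- (c * \<bar>W x\<bar>)))" if [measurable]: "W \<in> borel_measurable P" for W
      by (intro p.integrable_const_bound[where B=1] AE_I2) (auto simp: c)
    have "(\<lambda>k. (\<integral>x. exp (- (c * \<bar>VM (Ms k) x\<bar>)) \<partial>P) - (\<integral>x. exp (- (c * \<bar>V x\<bar>)) \<partial>P)) \<longlonglongrightarrow> 0"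
    proof (rule Lim_null_comparison)
      show "(\<lambda>k. c * (\<integral>x. \<bar>VM (Ms k) x - V x\<bar> \<partial>P)) \<longlonglongrightarrow> 0"
        using tendsto_mult_right_zero[OF limk, of c] by simp
      show "\<forall>\<^sub>F k in sequentially. norm ((\<integral>x. exp (- (c * \<bar>VM (Ms k) x\<bar>)) \<partial>P) - (\<integral>x. exp (- (c * \<bar>V x\<bar>)) \<partial>P))
              \<le> c * (\<integral>x. \<bar>VM (Ms k) x - V x\<bar> \<partial>P)"
        using evint
      proof eventually_elim
        case (elim k)
        have "norm ((\<integral>x. exp (- (c * \<bar>VM (Ms k) x\<bar>)) \<partial>P) - (\<integral>x. exp (- (c * \<bar>V x\<bar>)) \<partial>P))
            = \<bar>\<integral>x. exp (- (c * \<bar>VM (Ms k) x\<bar>)) - exp (- (c * \<bar>V x\<bar>)) \<partial>P\<bar>"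
          using ie[OF VMm] ie[OF Vm] by simp
        also have "\<dots> \<le> (\<integral>x. \<bar>exp (- (c * \<bar>VM (Ms k) x\<bar>)) - exp (- (c * \<bar>V x\<bar>))\<bar> \<partial>P)"
          by (rule integral_abs_bound)
        also have "\<dots> \<le> (\<integral>x. c * \<bar>VM (Ms k) x - V x\<bar> \<partial>P)"
          using ie[OF VMm] ie[OF Vm] elim Vi
          by (intro integral_mono exp_abs_lip c) auto
        also have "\<dots> = c * (\<integral>x. \<bar>VM (Ms k) x - V x\<bar> \<partial>P)" by simp
        finally show ?case .
      qed
    qed
    then have "(\<lambda>k. \<integral>x. exp (- (c * \<bar>VM (Ms k) x\<bar>)) \<partial>P) \<longlonglongrightarrow> (\<integral>x. exp (- (c * \<bar>V x\<bar>)) \<partial>P)"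
      by (rule LIM_zero_cancel)
    then have "(\<lambda>k. complex_of_real (\<integral>x. exp (- (c * \<bar>VM (Ms k) x\<bar>)) \<partial>P)) \<longlonglongrightarrow> complex_of_real (\<integral>x. exp (- (c * \<bar>V x\<bar>)) \<partial>P)"
      by (rule tendsto_of_real)
    then show "(\<lambda>k. char (normal_mix P (VM (Ms k))) t) \<longlonglongrightarrow> char (normal_mix P V) t"
      unfolding char_normal_mix[OF P VMm] char_normal_mix[OF P Vm] eq .
  qed
qed


theorem lemma3p17:
  fixes P :: "'a measure" and X :: "nat \<Rightarrow> 'a \<Rightarrow> real"
    and G :: "nat \<Rightarrow> nat \<Rightarrow> nat \<Rightarrow> bool" and \<sigma> :: "nat \<Rightarrow> nat \<Rightarrow> real"
  assumes "prob_space P"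
    and "\<And>i. X i \<in> borel_measurable P"
    and "prob_space.indep_vars P (\<lambda>_. borel) X {1..}"
    and "\<And>i. 1 \<le> i \<Longrightarrow> distr P borel (X i) = distr P borel (X 1)"
    and "integrable P (\<lambda>x. (X 1 x)\<^sup>2)"
    and "(\<integral>x. X 1 x \<partial>P) = 0"
    and "(\<integral>x. (X 1 x)\<^sup>2 \<partial>P) = 1"
    and "\<And>n. in_script_G n (G n)"
    and "filterlim (\<lambda>n. num_edges n (G n)) at_top sequentially"
    and "codegree_condition G \<sigma>"
  shows "\<exists>(VM :: real \<Rightarrow> 'a \<Rightarrow> real) (V :: 'a \<Rightarrow> real).
           (\<forall>M. trunc_var P X M > 0 \<longrightarrow>
               L1_conv P (quad_partial \<sigma> (trunc_std P X M)) (VM M) sequentially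
             \<and> (AE x in P. VM M x \<ge> 0))
         \<and> L1_conv P VM V at_top
         \<and> (AE x in P. V x \<ge> 0)
         \<and> weak_conv_at_top (\<lambda>M. normal_mix P (VM M)) (normal_mix P V)
         \<and> integrable (normal_mix P V) (\<lambda>y. y\<^sup>2)"
proof -
  have iidP: "iid P X" by (intro iid.intro iid_axioms.intro assms(1-4))
  have gs: "good_sigma \<sigma>" by (rule good_sigma_from_graph[OF assms(8) assms(10)])
  have "iid_sigma P X \<sigma>" by (intro iid_sigma.intro iid_sigma_axioms.intro iidP gs)
  then have "setting P X \<sigma>" by (intro setting.intro setting_axioms.intro assms(5-7))
  then interpret s: setting P X \<sigma> .
  obtain V where V: "V \<in> borel_measurable P" "integrable P V" "L1_conv P s.VM V at_top" "AE x in P. 0 \<le> V x"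
    using s.V_exists by blast
  have part1: "\<forall>M. trunc_var P X M > 0 \<longrightarrow>
               L1_conv P (quad_partial \<sigma> (trunc_std P X M)) (s.VM M) sequentially
             \<and> (AE x in P. s.VM M x \<ge> 0)"
    using s.VM_L1 s.VM_nn by auto
  have wc: "weak_conv_at_top (\<lambda>M. normal_mix P (s.VM M)) (normal_mix P V)"
    by (rule weak_conv_mix[OF assms(1) s.VM_meas V(1) V(3)])
  have sq: "integrable (normal_mix P V) (\<lambda>y. y\<^sup>2)"
    by (rule normal_mix_sq[OF assms(1) V(1) V(2)])
  show ?thesis by (intro exI[of _ "s.VM"] exI[of _ V] conjI part1 V(3) V(4) wc sq)
qed

end
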